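(* Let $\mathcal G=(G_n)$ be an expander sequence and let $I_t=I_t^{(pp)}$ for push\&pull on $G_n$ with transmission success probability $q\in(0,1]$, $U_t=V\setminus I_t$. (a) Let $|I_t|\le n/\log n$. Then $\mathbb E_t[|I_{t+1}\setminus I_t|]=(2q+o(1))|I_t|$. (b) Let $|U_t|\le n/\log n$. Then $\mathbb E_t[|U_{t+1}|]=(1+o(1))e^{-q}(1-q)|U_t|$.
   Context: push\&pull protocol: in each synchronous round every vertex chooses a neighbour independently and uniformly at random; an informed vertex informs its chosen neighbour (push) and an uninformed vertex that chose an informed neighbour becomes informed (pull), each such transmission succeeding independently with probability $q$. $I_t$ is the set of vertices informed at the beginning of round $t$ and $\mathbb E_t$ is expectation conditional on $I_t$. An expander sequence is a sequence $(G_n)$ of connected graphs, $G_n$ on $n$ vertices with minimum degree $\delta_n$, maximum degree $\Delta_n$, and $\lambda_n=\max\{|\mu_2|,|\mu_n|\}$ (adjacency eigenvalues), with $\Delta_n/\delta_n=1+o(1)$ and $\lambda_n=o(\Delta_n)$. Asymptotics as $n\to\infty$; natural log. *)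

theory Defs
  imports "HOL-Probability.Probability" "Jordan_Normal_Form.Char_Poly"
begin

definition simple_graph_on :: "nat \<Rightarrow> (nat \<Rightarrow> nat \<Rightarrow> bool) \<Rightarrow> bool" where
  "simple_graph_on n E \<longleftrightarrow>
     (\<forall>u v. E u v \<longrightarrow> u < n \<and> v < n) \<and> (\<forall>u v. E u v \<longrightarrow> E v u) \<and> (\<forall>v. \<not> E v v)"

definition connected_graph_on :: "nat \<Rightarrow> (nat \<Rightarrow> nat \<Rightarrow> bool) \<Rightarrow> bool" where
  "connected_graph_on n E \<longleftrightarrow> simple_graph_on n E \<and> 0 < n \<and>
     (\<forall>u<n. \<forall>v<n. E\<^sup>*\<^sup>* u v)"

definition nbrs :: "(nat \<Rightarrow> nat \<Rightarrow> bool) \<Rightarrow> nat \<Rightarrow> nat set" where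
  "nbrs E v = {u. E v u}"

definition degree :: "(nat \<Rightarrow> nat \<Rightarrow> bool) \<Rightarrow> nat \<Rightarrow> nat" where
  "degree E v = card (nbrs E v)"

definition min_degree :: "nat \<Rightarrow> (nat \<Rightarrow> nat \<Rightarrow> bool) \<Rightarrow> nat" where
  "min_degree n E = Min (degree E ` {0..<n})"

definition max_degree :: "nat \<Rightarrow> (nat \<Rightarrow> nat \<Rightarrow> bool) \<Rightarrow> nat" where
  "max_degree n E = Max (degree E ` {0..<n})"

definition adj_matrix :: "nat \<Rightarrow> (nat \<Rightarrow> nat \<Rightarrow> bool) \<Rightarrow> real mat" where
  "adj_matrix n E = mat n n (\<lambda>(i, j). if E i j then 1 else 0)"

text \<open>Adjacency eigenvalues (with multiplicity) in non-increasing order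
  mu_1 >= mu_2 >= ... >= mu_n; the list is indexed from 0.\<close>
definition adj_eigenvalues :: "nat \<Rightarrow> (nat \<Rightarrow> nat \<Rightarrow> bool) \<Rightarrow> real list" where
  "adj_eigenvalues n E = rev (sorted_list_of_multiset (proots (char_poly (adj_matrix n E))))"

definition second_eig :: "nat \<Rightarrow> (nat \<Rightarrow> nat \<Rightarrow> bool) \<Rightarrow> real" where
  "second_eig n E = max \<bar>adj_eigenvalues n E ! 1\<bar> \<bar>adj_eigenvalues n E ! (n - 1)\<bar>"

definition expander_seq :: "(nat \<Rightarrow> nat \<Rightarrow> nat \<Rightarrow> bool) \<Rightarrow> bool" where
  "expander_seq G \<longleftrightarrow>
     (\<forall>n>0. connected_graph_on n (G n)) \<and>
     ((\<lambda>n. real (max_degree n (G n)) / real (min_degree n (G n))) \<longlonglongrightarrow> 1) \<and>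
     ((\<lambda>n. second_eig n (G n) / real (max_degree n (G n))) \<longlonglongrightarrow> 0)"

text \<open>Every vertex v < n independently picks a uniformly random
  neighbour (first component) and an independent success coin with probability q
  (second component) governing the transmission along its chosen edge.\<close>
definition pp_choices :: "nat \<Rightarrow> (nat \<Rightarrow> nat \<Rightarrow> bool) \<Rightarrow> real \<Rightarrow> (nat \<Rightarrow> nat \<times> bool) pmf" where
  "pp_choices n E q = Pi_pmf {0..<n} (0, False)
     (\<lambda>v. pair_pmf (pmf_of_set (nbrs E v)) (bernoulli_pmf q))"

definition pp_step :: "nat \<Rightarrow> nat set \<Rightarrow> (nat \<Rightarrow> nat \<times> bool) \<Rightarrow> nat set" where
  "pp_step n I \<omega> = I \<union> {u \<in> {0..<n} - I.
      (fst (\<omega> u) \<in> I \<and> snd (\<omega> u)) \<or>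
      (\<exists>v\<in>I. fst (\<omega> v) = u \<and> snd (\<omega> v))}"

text \<open>Distribution of I_{t+1} given I_t = I.\<close>
definition pp_next :: "nat \<Rightarrow> (nat \<Rightarrow> nat \<Rightarrow> bool) \<Rightarrow> real \<Rightarrow> nat set \<Rightarrow> nat set pmf" where
  "pp_next n E q I = map_pmf (pp_step n I) (pp_choices n E q)"

end

theory Submission
  imports Defs "Jordan_Normal_Form.Schur_Decomposition"
begin

no_notation Finite_Cartesian_Product.vec_nth (infixl "$" 90)



lemma real_eigvec:
  fixes A :: "real mat"
  assumes A: "A \<in> carrier_mat n n" and n: "0 < n" and sym: "\<And>i j. i < n \<Longrightarrow> j < n \<Longrightarrow> A $$ (i,j) = A $$ (j,i)"
  shows "\<exists>e v. v \<in> carrier_vec n \<and> v \<noteq> 0\<^sub>v n \<and> A *\<^sub>v v = e \<cdot>\<^sub>v v"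
proof -
  define Ac where "Ac = map_mat complex_of_real A"
  have Ac: "Ac \<in> carrier_mat n n" using A unfolding Ac_def by auto
  obtain as where cp: "char_poly Ac = (\<Prod> a \<leftarrow> as. [:- a, 1:])" and len: "length as = n"
    using char_poly_factorized[OF Ac] by blast
  obtain a where a: "a \<in> set as" using len n by (cases as) auto
  have "poly (char_poly Ac) a = 0" unfolding cp using a
    by (induct as) (auto simp: poly_prod_list)
  hence "eigenvalue Ac a" using eigenvalue_root_char_poly[OF Ac] by simp
  then obtain z where z: "z \<in> carrier_vec n" "z \<noteq> 0\<^sub>v n" "Ac *\<^sub>v z = a \<cdot>\<^sub>v z"
    unfolding eigenvalue_def eigenvector_def using Ac by auto
  have zi: "(\<Sum>j<n. complex_of_real (A $$ (i,j)) * z $ j) = a * z $ i" if "i < n" for i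
  proof -
    have "(Ac *\<^sub>v z) $ i = a * z $ i" using z(3) that z(1) by simp
    moreover have "(Ac *\<^sub>v z) $ i = (\<Sum>j<n. complex_of_real (A $$ (i,j)) * z $ j)"
      using that A z(1) unfolding Ac_def by (auto simp: scalar_prod_def atLeast0LessThan)
    ultimately show ?thesis by simp
  qed
  define s where "s = (\<Sum>i<n. cnj (z $ i) * (\<Sum>j<n. complex_of_real (A $$ (i,j)) * z $ j))"
  define nz where "nz = (\<Sum>i<n. cnj (z $ i) * z $ i)"
  have s1: "s = a * nz" unfolding s_def nz_def using zi by (simp add: sum_distrib_left mult_ac)
  have "cnj s = (\<Sum>i<n. \<Sum>j<n. z $ i * (complex_of_real (A $$ (i,j)) * cnj (z $ j)))"
    unfolding s_def by (simp add: sum_distrib_left)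
  also have "\<dots> = (\<Sum>j<n. \<Sum>i<n. z $ i * (complex_of_real (A $$ (i,j)) * cnj (z $ j)))"
    by (rule sum.swap)
  also have "\<dots> = s" unfolding s_def sum_distrib_left
    by (intro sum.cong refl) (auto simp: sym mult_ac)
  finally have sreal: "Im s = 0" by (metis cnj.simps(2) neg_equal_zero)
  have nzr: "nz = complex_of_real (\<Sum>i<n. (cmod (z $ i))^2)" unfolding nz_def
    unfolding of_real_sum by (intro sum.cong refl) (simp add: complex_norm_square mult.commute del: of_real_power)
  obtain i0 where i0: "i0 < n" "z $ i0 \<noteq> 0" using z(1,2) by (metis eq_vecI carrier_vecD index_zero_vec(1,2))
  have pos: "(\<Sum>i<n. (cmod (z $ i))^2) > 0"
    by (rule sum_pos2[of _ i0]) (use i0 in auto)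
  have aim: "Im a = 0"
  proof -
    have "Im s = Im a * (\<Sum>i<n. (cmod (z $ i))^2)" unfolding s1 nzr by simp
    with sreal pos show ?thesis by simp
  qed
  define x where "x = vec n (\<lambda>i. Re (z $ i))"
  define y where "y = vec n (\<lambda>i. Im (z $ i))"
  have xe: "A *\<^sub>v x = Re a \<cdot>\<^sub>v x"
  proof (rule eq_vecI)
    fix i assume i: "i < dim_vec (Re a \<cdot>\<^sub>v x)"
    hence i': "i < n" unfolding x_def by simp
    have "(A *\<^sub>v x) $ i = (\<Sum>j<n. A $$ (i,j) * Re (z $ j))"
      using i' A unfolding x_def by (auto simp: scalar_prod_def atLeast0LessThan)
    also have "\<dots> = Re (\<Sum>j<n. complex_of_real (A $$ (i,j)) * z $ j)" by (simp add: Re_sum)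
    also have "\<dots> = Re a * Re (z $ i)" unfolding zi[OF i'] using aim by simp
    finally show "(A *\<^sub>v x) $ i = (Re a \<cdot>\<^sub>v x) $ i" using i' unfolding x_def by simp
  qed (use A in \<open>auto simp: x_def\<close>)
  have ye: "A *\<^sub>v y = Re a \<cdot>\<^sub>v y"
  proof (rule eq_vecI)
    fix i assume i: "i < dim_vec (Re a \<cdot>\<^sub>v y)"
    hence i': "i < n" unfolding y_def by simp
    have "(A *\<^sub>v y) $ i = (\<Sum>j<n. A $$ (i,j) * Im (z $ j))"
      using i' A unfolding y_def by (auto simp: scalar_prod_def atLeast0LessThan)
    also have "\<dots> = Im (\<Sum>j<n. complex_of_real (A $$ (i,j)) * z $ j)" by (simp add: Im_sum)
    also have "\<dots> = Re a * Im (z $ i)" unfolding zi[OF i'] using aim by simp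
    finally show "(A *\<^sub>v y) $ i = (Re a \<cdot>\<^sub>v y) $ i" using i' unfolding y_def by simp
  qed (use A in \<open>auto simp: y_def\<close>)
  have "x \<noteq> 0\<^sub>v n \<or> y \<noteq> 0\<^sub>v n"
  proof (rule ccontr)
    assume "\<not> ?thesis"
    hence "x $ i0 = 0" "y $ i0 = 0" using i0(1) by auto
    hence "z $ i0 = 0" using i0 unfolding x_def y_def by (simp add: complex_eq_iff)
    with i0 show False by simp
  qed
  moreover have "x \<in> carrier_vec n" "y \<in> carrier_vec n" unfolding x_def y_def by auto
  ultimately show ?thesis using xe ye by blast
qed


lemma conj_real_vec[simp]: "conjugate (w :: real vec) = w"
  by (rule eq_vecI) (auto simp: conjugate_real_def)

lemma orth_complete:
  fixes v :: "real vec"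
  assumes v: "v \<in> carrier_vec n" and v1: "v \<bullet> v = 1"
  shows "\<exists>W \<in> carrier_mat n n. transpose_mat W * W = 1\<^sub>m n \<and> col W 0 = v"
proof -
  have v0: "v \<noteq> 0\<^sub>v n" using v1 by auto
  interpret cof_vec_space n "TYPE(real)" .
  define b where "b = basis_completion v"
  from basis_completion[OF v v0, folded b_def]
  have dist_b: "distinct b" 
    and indep: "\<not> lin_dep (set b)" and b: "set b \<subseteq> carrier_vec n" and hdb: "hd b = v" 
    and len_b: "length b = n" by auto
  have n: "n \<noteq> 0" using v v1 by (cases n) (auto simp: scalar_prod_def)
  from hdb len_b n obtain vs where bv: "b = v # vs" by (cases b, auto)
  define ws where "ws = gram_schmidt n b"
  from gram_schmidt_result[OF b dist_b indep refl, folded ws_def]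
  have ws: "set ws \<subseteq> carrier_vec n" "corthogonal ws" "length ws = n" 
    by (auto simp: len_b)
  from gram_schmidt_hd[OF v, of vs, folded bv] have hdws: "hd ws = v" unfolding ws_def .
  have wsn: "ws ! i \<in> carrier_vec n" if "i < n" for i using ws that by auto
  have orth: "ws ! i \<bullet> ws ! j = 0 \<longleftrightarrow> i \<noteq> j" if "i < n" "j < n" for i j
    using corthogonalD[OF ws(2)] that ws(3) by simp
  have pos: "ws ! i \<bullet> ws ! i > 0" if "i < n" for i
  proof -
    have "0 \<le> ws ! i \<bullet>c ws ! i" by (rule conjugate_square_ge_0_vec)
    thus ?thesis using orth[OF that that] by simp
  qed
  define ws' where "ws' = map (\<lambda>w. (1 / sqrt (w \<bullet> w)) \<cdot>\<^sub>v w) ws"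
  define W where "W = mat_of_cols n ws'"
  have len': "length ws' = n" unfolding ws'_def using ws by simp
  have ws'n: "ws' ! i = (1 / sqrt (ws!i \<bullet> ws!i)) \<cdot>\<^sub>v ws!i" if "i < n" for i
    unfolding ws'_def using that ws by simp
  have ws'c: "ws' ! i \<in> carrier_vec n" if "i < n" for i using ws'n[OF that] wsn[OF that] by simp
  have W: "W \<in> carrier_mat n n" unfolding W_def using len' by (metis mat_of_cols_carrier(1))
  have colW: "col W i = ws' ! i" if "i < n" for i
    unfolding W_def by (rule col_mat_of_cols) (use that len' ws'c in auto)
  have "transpose_mat W * W = 1\<^sub>m n"
  proof (rule eq_matI)
    fix i j assume i: "i < dim_row (1\<^sub>m n)" and j: "j < dim_col (1\<^sub>m n)"
    hence i': "i < n" and j': "j < n" by auto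
    have "(transpose_mat W * W) $$ (i, j) = col W i \<bullet> col W j"
      using W i' j' by (simp add: index_mult_mat)
    also have "\<dots> = (1 / sqrt (ws!i \<bullet> ws!i)) * (1 / sqrt (ws!j \<bullet> ws!j)) * (ws!i \<bullet> ws!j)"
      unfolding colW[OF i'] colW[OF j'] ws'n[OF i'] ws'n[OF j']
      using wsn[OF i'] wsn[OF j'] by (simp add: scalar_prod_smult_distrib smult_scalar_prod_distrib)
    also have "\<dots> = 1\<^sub>m n $$ (i, j)"
    proof (cases "i = j")
      case True
      have "ws!i \<bullet> ws!i > 0" using pos[OF i'] .
      then show ?thesis using True i' by (simp add: real_sqrt_mult[symmetric])
    next
      case False
      then show ?thesis using orth[OF i' j'] i' j' by simp
    qed
    finally show "(transpose_mat W * W) $$ (i, j) = 1\<^sub>m n $$ (i, j)" .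
  qed (use W in auto)
  moreover have "col W 0 = v"
  proof -
    have "ws ! 0 = v" using hdws ws(3) n by (cases ws) auto
    thus ?thesis using colW[of 0] ws'n[of 0] n v1 by simp
  qed
  ultimately show ?thesis using W by blast
qed


lemma sym_entry:
  assumes "M \<in> carrier_mat n n" "transpose_mat M = M" "i < n" "j < n"
  shows "M $$ (i,j) = M $$ (j,i)"
proof -
  have "transpose_mat M $$ (j,i) = M $$ (i,j)" using assms(1,3,4) by simp
  thus ?thesis using assms(2) by simp
qed

lemma spectral:
  fixes A :: "real mat"
  assumes "A \<in> carrier_mat n n" "transpose_mat A = A"
  shows "\<exists>P D. P \<in> carrier_mat n n \<and> D \<in> carrier_mat n n \<and> transpose_mat P * P = 1\<^sub>m n
    \<and> diagonal_mat D \<and> A = P * D * transpose_mat P"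
  using assms
proof (induction n arbitrary: A)
  case 0
  have "A = 1\<^sub>m 0 * A * transpose_mat (1\<^sub>m 0)" by (rule eq_matI) (use 0 in auto)
  moreover have "diagonal_mat A" using 0 unfolding diagonal_mat_def by auto
  ultimately show ?case using 0 by (intro exI[of _ "1\<^sub>m 0"] exI[of _ A]) auto
next
  case (Suc m A)
  define n where "n = Suc m"
  have A: "A \<in> carrier_mat n n" using Suc n_def by simp
  have sym: "A $$ (i,j) = A $$ (j,i)" if "i < n" "j < n" for i j
    by (rule sym_entry[OF A Suc.prems(2) that])
  obtain e v0 where v0: "v0 \<in> carrier_vec n" "v0 \<noteq> 0\<^sub>v n" "A *\<^sub>v v0 = e \<cdot>\<^sub>v v0"
    using real_eigvec[OF A _ sym] n_def by auto
  have v0pos: "v0 \<bullet> v0 > 0" using conjugate_square_greater_0_vec[OF v0(1)] v0(2) by simp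
  define v where "v = (1 / sqrt (v0 \<bullet> v0)) \<cdot>\<^sub>v v0"
  have v: "v \<in> carrier_vec n" unfolding v_def using v0 by simp
  have v1: "v \<bullet> v = 1" unfolding v_def using v0(1) v0pos
    by (simp add: scalar_prod_smult_distrib smult_scalar_prod_distrib real_sqrt_mult[symmetric])
  have Av: "A *\<^sub>v v = e \<cdot>\<^sub>v v" unfolding v_def using v0 A
    by (simp add: mult_mat_vec smult_smult_assoc mult.commute)
  obtain W where W: "W \<in> carrier_mat n n" and WtW: "transpose_mat W * W = 1\<^sub>m n" and cW: "col W 0 = v"
    using orth_complete[OF v v1] by blast
  have Wt: "transpose_mat W \<in> carrier_mat n n" using W by simp
  have WWt: "W * transpose_mat W = 1\<^sub>m n" by (rule mat_mult_left_right_inverse[OF Wt W WtW])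
  define A' where "A' = transpose_mat W * A * W"
  have A': "A' \<in> carrier_mat n n" unfolding A'_def using W A by simp
  have A'sym: "transpose_mat A' = A'"
  proof -
    have "transpose_mat A' = transpose_mat W * transpose_mat (transpose_mat W * A)"
      unfolding A'_def by (rule transpose_mult[of _ n n]) (use W A in auto)
    also have "transpose_mat (transpose_mat W * A) = transpose_mat A * W"
      using transpose_mult[of "transpose_mat W" n n A n] W A by simp
    finally show ?thesis unfolding A'_def using Suc.prems(2) W A
      by (simp add: assoc_mult_mat[of _ n n _ n _ n])
  qed
  have A'0: "A' $$ (i, 0) = (if i = 0 then e else 0)" if i: "i < n" for i
  proof -
    have "A' $$ (i, 0) = row (transpose_mat W) i \<bullet> col (A * W) 0"
      unfolding A'_def using W A i n_def by (simp add: assoc_mult_mat[of _ n n _ n _ n] index_mult_mat)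
    also have "col (A * W) 0 = e \<cdot>\<^sub>v v" using col_mult2[OF A W, of 0] n_def cW Av by simp
    also have "row (transpose_mat W) i \<bullet> (e \<cdot>\<^sub>v v) = e * (col W i \<bullet> col W 0)"
      using W v i cW by (simp add: scalar_prod_smult_distrib[of _ n])
    also have "col W i \<bullet> col W 0 = (transpose_mat W * W) $$ (i, 0)"
      using W i n_def by (simp add: index_mult_mat)
    finally show ?thesis using WtW i n_def by simp
  qed
  have A'0' : "A' $$ (0, j) = (if j = 0 then e else 0)" if j: "j < n" for j
    using A'0[OF j] sym_entry[OF A' A'sym, of 0 j] j n_def by simp
  define A1 where "A1 = mat 1 1 (\<lambda>_. e)"
  define A3 where "A3 = mat m m (\<lambda>(i,j). A' $$ (Suc i, Suc j))"
  have A3: "A3 \<in> carrier_mat m m" unfolding A3_def by simp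
  have A3sym: "transpose_mat A3 = A3"
  proof (rule eq_matI)
    fix i j assume "i < dim_row A3" "j < dim_col A3"
    hence "i < m" "j < m" unfolding A3_def by auto
    moreover have "A' $$ (Suc j, Suc i) = A' $$ (Suc i, Suc j)"
      by (rule sym_entry[OF A' A'sym]) (use \<open>i < m\<close> \<open>j < m\<close> n_def in auto)
    ultimately show "transpose_mat A3 $$ (i, j) = A3 $$ (i, j)" unfolding A3_def by simp
  qed (auto simp: A3_def)
  have A'blk: "A' = four_block_mat A1 (0\<^sub>m 1 m) (0\<^sub>m m 1) A3"
  proof (rule eq_matI)
    fix i j assume ij: "i < dim_row (four_block_mat A1 (0\<^sub>m 1 m) (0\<^sub>m m 1) A3)"
       "j < dim_col (four_block_mat A1 (0\<^sub>m 1 m) (0\<^sub>m m 1) A3)"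
    hence i: "i < n" and j: "j < n" unfolding A1_def A3_def n_def by auto
    show "A' $$ (i, j) = four_block_mat A1 (0\<^sub>m 1 m) (0\<^sub>m m 1) A3 $$ (i, j)"
      using ij A'0[OF i] A'0'[OF j] unfolding A1_def A3_def
      by (cases i; cases j) auto
  qed (use A' n_def in \<open>auto simp: A1_def A3_def\<close>)
  obtain P3 D3 where P3: "P3 \<in> carrier_mat m m" and D3: "D3 \<in> carrier_mat m m"
    and P3o: "transpose_mat P3 * P3 = 1\<^sub>m m" and D3d: "diagonal_mat D3"
    and A3eq: "A3 = P3 * D3 * transpose_mat P3"
    using Suc.IH[OF A3 A3sym] by blast
  define B where "B = four_block_mat (1\<^sub>m 1) (0\<^sub>m 1 m) (0\<^sub>m m 1) P3"
  define P where "P = W * B"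
  define D where "D = four_block_mat A1 (0\<^sub>m 1 m) (0\<^sub>m m 1) D3"
  have B: "B \<in> carrier_mat n n" unfolding B_def n_def using P3 by auto
  have Bt: "transpose_mat B = four_block_mat (1\<^sub>m 1) (0\<^sub>m 1 m) (0\<^sub>m m 1) (transpose_mat P3)"
    unfolding B_def using P3 by (subst transpose_four_block_mat) auto
  have A1c: "A1 \<in> carrier_mat 1 1" unfolding A1_def by simp
  have P: "P \<in> carrier_mat n n" unfolding P_def using W B by simp
  have D: "D \<in> carrier_mat n n" unfolding D_def n_def using D3 A1c by auto
  have BtB: "transpose_mat B * B = 1\<^sub>m n"
    unfolding Bt unfolding B_def using P3 P3o
    by (subst mult_four_block_mat[where ?nr1.0=1 and ?n1.0=1 and ?n2.0=m and ?nr2.0=m and ?nc1.0=1 and ?nc2.0=m]) (auto simp: n_def four_block_one_mat[of 1 m, simplified])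
  have "transpose_mat P * P = transpose_mat B * (transpose_mat W * W) * B"
    unfolding P_def using W B Wt
    by (simp add: transpose_mult[of _ n n] assoc_mult_mat[of _ n n _ n _ n])
  also have "\<dots> = 1\<^sub>m n" using WtW BtB B by simp
  finally have PtP: "transpose_mat P * P = 1\<^sub>m n" .
  have Dd: "diagonal_mat D" unfolding D_def diagonal_mat_def
  proof (intro allI impI)
    fix i j assume "i < dim_row (four_block_mat A1 (0\<^sub>m 1 m) (0\<^sub>m m 1) D3)"
      "j < dim_col (four_block_mat A1 (0\<^sub>m 1 m) (0\<^sub>m m 1) D3)" "i \<noteq> j"
    thus "four_block_mat A1 (0\<^sub>m 1 m) (0\<^sub>m m 1) D3 $$ (i, j) = 0"
      using D3 D3d unfolding A1_def diagonal_mat_def by (cases i; cases j) auto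
  qed
  have BDBt: "B * D * transpose_mat B = A'"
  proof -
    have "B * D = four_block_mat A1 (0\<^sub>m 1 m) (0\<^sub>m m 1) (P3 * D3)"
      unfolding B_def D_def using P3 D3 A1c
      by (subst mult_four_block_mat[where ?nr1.0=1 and ?n1.0=1 and ?n2.0=m and ?nr2.0=m and ?nc1.0=1 and ?nc2.0=m]) auto
    also have "\<dots> * transpose_mat B = four_block_mat A1 (0\<^sub>m 1 m) (0\<^sub>m m 1) (P3 * D3 * transpose_mat P3)"
      unfolding Bt using P3 D3 A1c
      by (subst mult_four_block_mat[where ?nr1.0=1 and ?n1.0=1 and ?n2.0=m and ?nr2.0=m and ?nc1.0=1 and ?nc2.0=m]) auto
    finally show ?thesis unfolding A'blk A3eq .
  qed
  have "P * D * transpose_mat P = W * (B * D * transpose_mat B) * transpose_mat W"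
    unfolding P_def using W B D Wt
    by (simp add: transpose_mult[of _ n n] assoc_mult_mat[of _ n n _ n _ n])
  also have "\<dots> = (W * transpose_mat W) * A * (W * transpose_mat W)"
    unfolding BDBt A'_def using W A Wt
    by (simp add: assoc_mult_mat[of _ n n _ n _ n])
  also have "\<dots> = A" using WWt A by simp
  finally have "A = P * D * transpose_mat P" ..
  thus ?case using P D PtP Dd n_def by blast
qed


lemma proots_lin_prod: "proots (\<Prod>a\<leftarrow>es. [:- a, 1:]) = mset (es :: real list)"
proof (induct es)
  case (Cons a es)
  have nz: "(\<Prod>a\<leftarrow>es. [:- a, 1:]) \<noteq> (0 :: real poly)"
    by (auto simp: prod_list_zero_iff)
  have "proots ([:- a, 1:] * (\<Prod>a\<leftarrow>es. [:- a, 1:])) = proots [:- a, 1:] + proots (\<Prod>a\<leftarrow>es. [:- a, 1:])"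
    by (rule proots_mult) (use nz in auto)
  thus ?case using Cons by (simp add: proots_linear_factor del: mult_pCons_left)
qed simp

lemma adj_eigsys:
  assumes G: "simple_graph_on n E"
  defines "L \<equiv> adj_eigenvalues n E"
  shows "\<exists>q :: nat \<Rightarrow> nat \<Rightarrow> real.
     (\<forall>a<n. \<forall>b<n. (\<Sum>j<n. q a j * q b j) = (if a = b then 1 else 0)) \<and>
     (\<forall>i<n. \<forall>j<n. (\<Sum>k<n. q k i * q k j) = (if i = j then 1 else 0)) \<and>
     (\<forall>k<n. \<forall>i<n. (\<Sum>j<n. (if E i j then 1 else 0) * q k j) = L ! k * q k i) \<and>
     length L = n \<and> (\<forall>i j. i \<le> j \<longrightarrow> j < n \<longrightarrow> L ! j \<le> L ! i)"
proof -
  define A where "A = adj_matrix n E"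
  have A: "A \<in> carrier_mat n n" unfolding A_def adj_matrix_def by simp
  have symE: "E i j = E j i" for i j using G unfolding simple_graph_on_def by blast
  have At: "transpose_mat A = A"
    by (rule eq_matI) (use A in \<open>auto simp: A_def adj_matrix_def symE\<close>)
  obtain P D where P: "P \<in> carrier_mat n n" and D: "D \<in> carrier_mat n n"
    and PtP: "transpose_mat P * P = 1\<^sub>m n" and Dd: "diagonal_mat D"
    and AP: "A = P * D * transpose_mat P"
    using spectral[OF A At] by blast
  have Pt: "transpose_mat P \<in> carrier_mat n n" using P by simp
  have PPt: "P * transpose_mat P = 1\<^sub>m n" by (rule mat_mult_left_right_inverse[OF Pt P PtP])
  define es where "es = diag_mat D"
  have les: "length es = n" unfolding es_def diag_mat_def using D by simp
  have esk: "es ! k = D $$ (k,k)" if "k < n" for k unfolding es_def diag_mat_def using D that by simp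
  have sim: "similar_mat A D"
    unfolding similar_mat_def similar_mat_wit_def Let_def
    by (rule exI[of _ P], rule exI[of _ "transpose_mat P"]) (use A D P PPt PtP AP in auto)
  have ut: "upper_triangular D" using Dd D unfolding diagonal_mat_def upper_triangular_def by auto
  have cp: "char_poly A = (\<Prod>a\<leftarrow>es. [:- a, 1:])"
    unfolding char_poly_similar[OF sim] es_def by (rule char_poly_upper_triangular[OF D ut])
  have Lm: "L = rev (sort es)"
    unfolding L_def adj_eigenvalues_def A_def[symmetric] cp proots_lin_prod sorted_list_of_multiset_mset ..
  have lL: "length L = n" using Lm les by simp
  have sortL: "L ! j \<le> L ! i" if "i \<le> j" "j < n" for i j
  proof -
    have s: "sorted (sort es)" by simp
    have "sort es ! (n - 1 - j) \<le> sort es ! (n - 1 - i)"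
      by (rule sorted_nth_mono[OF s]) (use that les in auto)
    thus ?thesis unfolding Lm using that les by (simp add: rev_nth)
  qed
  have "mset L = mset es" unfolding Lm by simp
  then obtain \<sigma> where \<sigma>: "\<sigma> permutes {..<length es}" and pl: "permute_list \<sigma> es = L"
    by (rule mset_eq_permutation)
  have \<sigma>n: "\<sigma> permutes {..<n}" using \<sigma> les by simp
  have Lk: "L ! k = es ! \<sigma> k" if "k < n" for k
    using permute_list_nth[OF \<sigma>, of k] pl that les by simp
  have \<sigma>lt: "\<sigma> k < n" if "k < n" for k using permutes_in_image[OF \<sigma>n] that by simp
  define q where "q = (\<lambda>k j. P $$ (j, \<sigma> k))"
  have O1p: "(\<Sum>j<n. P $$ (j, a) * P $$ (j, b)) = (if a = b then 1 else 0)" if "a < n" "b < n" for a b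
  proof -
    have "(transpose_mat P * P) $$ (a, b) = (\<Sum>j<n. P $$ (j, a) * P $$ (j, b))"
      using that P by (simp add: index_mult_mat scalar_prod_def atLeast0LessThan)
    thus ?thesis using PtP that by simp
  qed
  have O2p: "(\<Sum>k<n. P $$ (i, k) * P $$ (j, k)) = (if i = j then 1 else 0)" if "i < n" "j < n" for i j
  proof -
    have "(P * transpose_mat P) $$ (i, j) = (\<Sum>k<n. P $$ (i, k) * P $$ (j, k))"
      using that P by (simp add: index_mult_mat scalar_prod_def atLeast0LessThan)
    thus ?thesis using PPt that by simp
  qed
  have AP2: "A * P = P * D"
  proof -
    have "A * P = P * D * (transpose_mat P * P)" unfolding AP using P D Pt
      by (simp add: assoc_mult_mat[of _ n n _ n _ n])
    thus ?thesis using PtP P D by simp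
  qed
  have Ep: "(\<Sum>j<n. (if E i j then 1 else 0) * P $$ (j, k)) = es ! k * P $$ (i, k)" if "k < n" "i < n" for k i
  proof -
    have "(A * P) $$ (i, k) = (\<Sum>j<n. (if E i j then 1 else 0) * P $$ (j, k))"
      using that P A by (simp add: index_mult_mat scalar_prod_def atLeast0LessThan A_def adj_matrix_def)
    moreover have "(P * D) $$ (i, k) = (\<Sum>j<n. P $$ (i, j) * D $$ (j, k))"
      using that P D by (simp add: index_mult_mat scalar_prod_def atLeast0LessThan)
    moreover have "(\<Sum>j<n. P $$ (i, j) * D $$ (j, k)) = P $$ (i, k) * D $$ (k, k)"
    proof (rule trans[OF sum.remove[of _ k]])
      show "P $$ (i, k) * D $$ (k, k) + (\<Sum>j\<in>{..<n} - {k}. P $$ (i, j) * D $$ (j, k)) = P $$ (i, k) * D $$ (k, k)"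
        using Dd D that unfolding diagonal_mat_def by simp
    qed (use that in auto)
    ultimately show ?thesis using AP2 esk[OF that(1)] by (simp add: mult.commute)
  qed
  have "(\<forall>a<n. \<forall>b<n. (\<Sum>j<n. q a j * q b j) = (if a = b then 1 else 0))"
  proof (intro allI impI)
    fix a b assume "a < n" "b < n"
    moreover have "(\<sigma> a = \<sigma> b) = (a = b)" using \<sigma>n by (metis permutes_inj inj_eq)
    ultimately show "(\<Sum>j<n. q a j * q b j) = (if a = b then 1 else 0)"
      unfolding q_def using O1p[OF \<sigma>lt \<sigma>lt] by simp
  qed
  moreover have "(\<forall>i<n. \<forall>j<n. (\<Sum>k<n. q k i * q k j) = (if i = j then 1 else 0))"
  proof (intro allI impI)
    fix i j assume ij: "i < n" "j < n"
    have "(\<Sum>k<n. q k i * q k j) = (\<Sum>k<n. P $$ (i, \<sigma> k) * P $$ (j, \<sigma> k))" unfolding q_def ..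
    also have "\<dots> = (\<Sum>k<n. P $$ (i, k) * P $$ (j, k))"
      using sum.permute[OF \<sigma>n, of "\<lambda>k. P $$ (i, k) * P $$ (j, k)"] by (simp add: comp_def)
    finally show "(\<Sum>k<n. q k i * q k j) = (if i = j then 1 else 0)" using O2p[OF ij] by simp
  qed
  moreover have "(\<forall>k<n. \<forall>i<n. (\<Sum>j<n. (if E i j then 1 else 0) * q k j) = L ! k * q k i)"
    unfolding q_def using Ep \<sigma>lt Lk by simp
  ultimately show ?thesis using lL sortL by blast
qed


lemma expand_sum:
  fixes q :: "nat \<Rightarrow> nat \<Rightarrow> real"
  assumes O1: "\<And>a b. a < n \<Longrightarrow> b < n \<Longrightarrow> (\<Sum>j<n. q a j * q b j) = (if a = b then 1 else 0)"
  shows "(\<Sum>i<n. (\<Sum>k<n. f k * q k i) * (\<Sum>l<n. g l * q l i)) = (\<Sum>k<n. f k * g k)"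
proof -
  have "(\<Sum>i<n. (\<Sum>k<n. f k * q k i) * (\<Sum>l<n. g l * q l i))
      = (\<Sum>i<n. \<Sum>k<n. \<Sum>l<n. f k * g l * (q k i * q l i))"
    unfolding sum_product by (intro sum.cong refl) (simp add: mult_ac)
  also have "\<dots> = (\<Sum>k<n. \<Sum>l<n. \<Sum>i<n. f k * g l * (q k i * q l i))"
    by (subst sum.swap) (rule sum.cong[OF refl], rule sum.swap)
  also have "\<dots> = (\<Sum>k<n. \<Sum>l<n. f k * g l * (if k = l then 1 else 0))"
    by (intro sum.cong refl) (simp add: sum_distrib_left[symmetric] O1)
  also have "\<dots> = (\<Sum>k<n. f k * g k)"
    by (intro sum.cong refl) (simp add: if_distrib cong: if_cong)
  finally show ?thesis .
qed

lemma coeff_expand: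
  fixes q :: "nat \<Rightarrow> nat \<Rightarrow> real"
  assumes O2: "\<And>i j. i < n \<Longrightarrow> j < n \<Longrightarrow> (\<Sum>k<n. q k i * q k j) = (if i = j then 1 else 0)"
  and j: "j < n"
  shows "(\<Sum>k<n. (\<Sum>l<n. x l * q k l) * q k j) = x j"
proof -
  have "(\<Sum>k<n. (\<Sum>l<n. x l * q k l) * q k j) = (\<Sum>l<n. x l * (\<Sum>k<n. q k l * q k j))"
    by (simp add: sum_distrib_left sum_distrib_right mult_ac) (rule sum.swap)
  also have "\<dots> = (\<Sum>l<n. x l * (if l = j then 1 else 0))"
    by (intro sum.cong refl) (simp add: O2 j)
  also have "\<dots> = x j" using j by (simp add: if_distrib cong: if_cong)
  finally show ?thesis .
qed

locale eigsys =
  fixes n :: nat and a :: "nat \<Rightarrow> nat \<Rightarrow> real" and q :: "nat \<Rightarrow> nat \<Rightarrow> real" and L :: "nat \<Rightarrow> real"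
  assumes O1: "\<And>a b. a < n \<Longrightarrow> b < n \<Longrightarrow> (\<Sum>j<n. q a j * q b j) = (if a = b then 1 else 0)"
  and O2: "\<And>i j. i < n \<Longrightarrow> j < n \<Longrightarrow> (\<Sum>k<n. q k i * q k j) = (if i = j then 1 else 0)"
  and Eig: "\<And>k i. k < n \<Longrightarrow> i < n \<Longrightarrow> (\<Sum>j<n. a i j * q k j) = L k * q k i"
begin

definition cf :: "(nat \<Rightarrow> real) \<Rightarrow> nat \<Rightarrow> real" where
  "cf x k = (\<Sum>j<n. x j * q k j)"

definition Ax :: "(nat \<Rightarrow> real) \<Rightarrow> nat \<Rightarrow> real" where
  "Ax x i = (\<Sum>j<n. a i j * x j)"

lemma x_expand: "j < n \<Longrightarrow> x j = (\<Sum>k<n. cf x k * q k j)"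
  unfolding cf_def using coeff_expand[OF O2] by simp

lemma Ax_expand: "i < n \<Longrightarrow> Ax x i = (\<Sum>k<n. (L k * cf x k) * q k i)"
proof -
  assume i: "i < n"
  have "Ax x i = (\<Sum>j<n. a i j * (\<Sum>k<n. cf x k * q k j))"
    unfolding Ax_def by (intro sum.cong refl) (simp add: x_expand[symmetric])
  also have "\<dots> = (\<Sum>k<n. cf x k * (\<Sum>j<n. a i j * q k j))"
    by (simp add: sum_distrib_left mult_ac) (rule sum.swap)
  also have "\<dots> = (\<Sum>k<n. (L k * cf x k) * q k i)"
    by (intro sum.cong refl) (simp add: Eig i)
  finally show ?thesis .
qed

lemma parseval: "(\<Sum>i<n. x i * y i) = (\<Sum>k<n. cf x k * cf y k)"
proof -
  have "(\<Sum>i<n. x i * y i) = (\<Sum>i<n. (\<Sum>k<n. cf x k * q k i) * (\<Sum>l<n. cf y l * q l i))"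
    by (intro sum.cong refl) (simp add: x_expand[symmetric])
  also have "\<dots> = (\<Sum>k<n. cf x k * cf y k)" by (rule expand_sum[OF O1])
  finally show ?thesis .
qed

lemma norm_Ax: "(\<Sum>i<n. (Ax x i)^2) = (\<Sum>k<n. (L k)^2 * (cf x k)^2)"
proof -
  have "(\<Sum>i<n. (Ax x i)^2) = (\<Sum>i<n. (\<Sum>k<n. (L k * cf x k) * q k i) * (\<Sum>l<n. (L l * cf x l) * q l i))"
    by (intro sum.cong refl) (simp add: Ax_expand power2_eq_square)
  also have "\<dots> = (\<Sum>k<n. (L k)^2 * (cf x k)^2)"
    by (subst expand_sum[where q=q and n=n]) (auto simp: O1 power2_eq_square algebra_simps intro!: sum.cong)
  finally show ?thesis .
qed

lemma quad_Ax: "(\<Sum>i<n. x i * Ax x i) = (\<Sum>k<n. L k * (cf x k)^2)"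
proof -
  have "(\<Sum>i<n. x i * Ax x i) = (\<Sum>i<n. (\<Sum>k<n. cf x k * q k i) * (\<Sum>l<n. (L l * cf x l) * q l i))"
    by (intro sum.cong refl) (simp add: Ax_expand x_expand[symmetric])
  also have "\<dots> = (\<Sum>k<n. L k * (cf x k)^2)"
    by (subst expand_sum[where q=q and n=n]) (auto simp: O1 power2_eq_square algebra_simps intro!: sum.cong)
  finally show ?thesis .
qed

lemma norm_cf: "(\<Sum>k<n. (cf x k)^2) = (\<Sum>i<n. (x i)^2)"
  using parseval[of x x] by (simp add: power2_eq_square)

end


lemma card_as_sum:
  assumes "finite A" shows "real (card {j \<in> A. P j}) = (\<Sum>j\<in>A. if P j then 1 else 0)"
  using sum.inter_filter[OF assms, of "\<lambda>_. (1::real)" P] by simp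

lemma sum_delta_mult1: "i < (n::nat) \<Longrightarrow> (\<Sum>j<n. (if j = i then 1 else 0) * f j) = (f i :: real)"
proof -
  assume i: "i < n"
  have "(\<Sum>j<n. (if j = i then 1 else 0) * f j) = (\<Sum>j<n. if j = i then f j else 0)"
    by (intro sum.cong) auto
  thus ?thesis using i by (simp add: sum.delta)
qed

lemma sum_delta_mult2: "i < (n::nat) \<Longrightarrow> (\<Sum>j<n. f j * (if j = i then 1 else 0)) = (f i :: real)"
  using sum_delta_mult1[of i n f] by (simp add: mult.commute)

context
  fixes n :: nat and E :: "nat \<Rightarrow> nat \<Rightarrow> bool"
  assumes G: "simple_graph_on n E" and n2: "2 \<le> n"
begin

definition "aa i j = (if E i j then 1 else (0::real))"

lemma symE: "E i j = E j i" using G unfolding simple_graph_on_def by blast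
lemma Ebound: "E i j \<Longrightarrow> i < n \<and> j < n" using G unfolding simple_graph_on_def by blast

lemma nbrs_sub: "nbrs E i = {j \<in> {..<n}. E i j}"
  unfolding nbrs_def using Ebound by auto

lemma deg_sum: "real (degree E i) = (\<Sum>j<n. aa i j)"
  unfolding degree_def nbrs_sub aa_def by (rule card_as_sum) simp

lemma card_nbrs_S: "real (card (nbrs E i \<inter> S)) = (\<Sum>j<n. aa i j * (if j \<in> S then 1 else 0))"
proof -
  have "nbrs E i \<inter> S = {j \<in> {..<n}. E i j \<and> j \<in> S}" unfolding nbrs_sub by auto
  hence "real (card (nbrs E i \<inter> S)) = (\<Sum>j<n. if E i j \<and> j \<in> S then 1 else 0)"
    using card_as_sum[of "{..<n}" "\<lambda>j. E i j \<and> j \<in> S"] by simp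
  moreover have "(\<Sum>j<n. if E i j \<and> j \<in> S then 1 else 0) = (\<Sum>j<n. aa i j * (if j \<in> S then 1 else (0::real)))"
    by (intro sum.cong refl) (auto simp: aa_def)
  ultimately show ?thesis by simp
qed

lemma min_deg_le: "i < n \<Longrightarrow> min_degree n E \<le> degree E i"
  unfolding min_degree_def by (rule Min_le) auto
lemma max_deg_ge: "i < n \<Longrightarrow> degree E i \<le> max_degree n E"
  unfolding max_degree_def by (rule Max_ge) auto

lemma graph_facts:
  defines "\<delta> \<equiv> real (min_degree n E)" and "\<Delta> \<equiv> real (max_degree n E)" and "lm \<equiv> second_eig n E"
  assumes gap: "lm < \<delta>"
  shows "\<And>S. S \<subseteq> {..<n} \<Longrightarrow> (\<Sum>i<n. (real (card (nbrs E i \<inter> S)))^2)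
           \<le> \<Delta>^2 * (2 * real (card S) * ((\<Delta> - \<delta>) / (\<Delta> - lm)) + 2 * (real (card S))^2 / real n) + lm^2 * real (card S)"
    and "real n * \<delta> \<le> \<Delta>^2 + real n * lm^2"
proof -
  define L where "L = adj_eigenvalues n E"
  obtain q where O1: "\<forall>a<n. \<forall>b<n. (\<Sum>j<n. q a j * q b j) = (if a = b then 1 else 0)"
    and O2: "\<forall>i<n. \<forall>j<n. (\<Sum>k<n. q k i * q k j) = (if i = j then 1 else 0)"
    and Eg: "\<forall>k<n. \<forall>i<n. (\<Sum>j<n. (if E i j then 1 else 0) * q k j) = L ! k * q k i"
    and lL: "length L = n" and sL: "\<forall>i j. i \<le> j \<longrightarrow> j < n \<longrightarrow> L ! j \<le> L ! i"
    using adj_eigsys[OF G] unfolding L_def by blast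
  interpret es: eigsys n aa q "\<lambda>k. L ! k"
    by unfold_locales (use O1 O2 Eg in \<open>auto simp: aa_def\<close>)
  obtain m where nm: "n = Suc m" and m1: "1 \<le> m" using n2 by (cases n) auto
  have lam: "\<bar>L ! k\<bar> \<le> lm" if "1 \<le> k" "k < n" for k
  proof -
    have "L ! k \<le> L ! 1" "L ! (n - 1) \<le> L ! k" using sL that by auto
    thus ?thesis unfolding lm_def second_eig_def L_def[symmetric] by linarith
  qed
  have lam0: "0 \<le> lm" unfolding lm_def second_eig_def by simp
  have dlo: "\<delta> \<le> (\<Sum>j<n. aa i j)" if "i < n" for i
    unfolding \<delta>_def deg_sum[symmetric] using min_deg_le[OF that] by simp
  have dhi: "(\<Sum>j<n. aa i j) \<le> \<Delta>" if "i < n" for i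
    unfolding \<Delta>_def deg_sum[symmetric] using max_deg_ge[OF that] by simp
  have aa01: "aa i j \<ge> 0" "aa i j * aa i j = aa i j" "aa i j = aa j i" for i j
    unfolding aa_def using symE by auto
  have L0: "\<bar>L ! 0\<bar> \<le> \<Delta>"
  proof -
    define M where "M = Max ((\<lambda>j. \<bar>q 0 j\<bar>) ` {..<n})"
    have "M \<in> (\<lambda>j. \<bar>q 0 j\<bar>) ` {..<n}" unfolding M_def by (rule Max_in) (use nm in auto)
    then obtain i where i: "i < n" and Mi: "M = \<bar>q 0 i\<bar>" by auto
    have Mge: "\<bar>q 0 j\<bar> \<le> M" if "j < n" for j unfolding M_def using that by (intro Max_ge) auto
    have "M \<noteq> 0"
    proof
      assume "M = 0"
      hence "q 0 j = 0" if "j < n" for j using Mge[OF that] by simp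
      hence "(\<Sum>j<n. q 0 j * q 0 j) = 0" by simp
      thus False using O1 nm by auto
    qed
    hence Mpos: "M > 0" using Mi by simp
    have "\<bar>L ! 0\<bar> * M = \<bar>\<Sum>j<n. aa i j * q 0 j\<bar>"
      using es.Eig[of 0 i] i nm Mi by (simp add: abs_mult)
    also have "\<dots> \<le> (\<Sum>j<n. aa i j * \<bar>q 0 j\<bar>)"
      by (rule order_trans[OF sum_abs]) (simp add: abs_mult aa01)
    also have "\<dots> \<le> (\<Sum>j<n. aa i j * M)"
      by (intro sum_mono mult_left_mono) (auto simp: Mge aa01)
    also have "\<dots> \<le> \<Delta> * M" using dhi[OF i] Mpos by (simp add: sum_distrib_right[symmetric])
    finally show ?thesis using Mpos by simp
  qed
  have Ldelta: "\<Delta> \<ge> 0" using L0 by linarith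
  define one where "one = (\<lambda>j::nat. 1::real)"
  define c0 where "c0 = es.cf one 0"
  have ncf1: "(\<Sum>k<n. (es.cf one k)^2) = real n" using es.norm_cf[of one] by (simp add: one_def)
  have c0n: "c0^2 \<le> real n"
  proof -
    have "c0^2 \<le> (\<Sum>k<n. (es.cf one k)^2)" unfolding c0_def
      by (rule member_le_sum) (use nm in auto)
    thus ?thesis using ncf1 by simp
  qed
  have split: "(\<Sum>k<n. f k) = f 0 + (\<Sum>k\<in>{1..<n}. f k)" for f :: "nat \<Rightarrow> real"
    using nm by (simp add: sum.atLeast_Suc_lessThan atLeast0LessThan[symmetric])
  have "real n * \<delta> \<le> (\<Sum>i<n. one i * es.Ax one i)"
  proof -
    have "real n * \<delta> = (\<Sum>i<n. \<delta>)" by simp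
    also have "\<dots> \<le> (\<Sum>i<n. one i * es.Ax one i)"
      by (intro sum_mono) (auto simp: one_def es.Ax_def dlo)
    finally show ?thesis .
  qed
  also have "\<dots> = (\<Sum>k<n. L ! k * (es.cf one k)^2)" by (rule es.quad_Ax)
  also have "\<dots> = L ! 0 * c0^2 + (\<Sum>k\<in>{1..<n}. L ! k * (es.cf one k)^2)" unfolding c0_def by (rule split)
  also have "(\<Sum>k\<in>{1..<n}. L ! k * (es.cf one k)^2) \<le> (\<Sum>k\<in>{1..<n}. lm * (es.cf one k)^2)"
    by (intro sum_mono mult_right_mono) (use lam in \<open>auto simp: abs_le_iff\<close>)
  also have "(\<Sum>k\<in>{1..<n}. lm * (es.cf one k)^2) = lm * (real n - c0^2)"
    using split[of "\<lambda>k. (es.cf one k)^2"] ncf1 unfolding c0_def by (simp add: sum_distrib_left[symmetric])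
  finally have key1: "real n * \<delta> \<le> L ! 0 * c0^2 + lm * (real n - c0^2)" by simp
  define g where "g = c0^2 / real n"
  have npos: "real n > 0" using nm by simp
  have g01: "0 \<le> g" "g \<le> 1" unfolding g_def using c0n npos by auto
  have key2: "\<delta> \<le> L ! 0 * g + lm * (1 - g)"
  proof -
    have "real n * \<delta> \<le> real n * (L ! 0 * g + lm * (1 - g))"
      using key1 npos unfolding g_def by (simp add: algebra_simps)
    thus ?thesis using npos by simp
  qed
  have L0gt: "L ! 0 > lm"
  proof (rule ccontr)
    assume "\<not> ?thesis"
    hence "L ! 0 * g + lm * (1 - g) \<le> lm * g + lm * (1 - g)" using g01 by (intro add_right_mono mult_right_mono) auto
    thus False using key2 gap by (simp add: algebra_simps)
  qed
  have tau: "1 - g \<le> (\<Delta> - \<delta>) / (\<Delta> - lm)"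
  proof -
    have a: "(1 - g) * (L ! 0 - lm) \<le> L ! 0 - \<delta>" using key2 by (simp add: algebra_simps)
    have "L ! 0 \<le> \<Delta>" using L0 by simp
    hence "0 \<le> (\<Delta> - L ! 0) * (\<delta> - lm)" using gap by (intro mult_nonneg_nonneg) auto
    hence b: "(L ! 0 - \<delta>) * (\<Delta> - lm) \<le> (\<Delta> - \<delta>) * (L ! 0 - lm)"
      by (simp add: algebra_simps)
    have p1: "\<Delta> - lm > 0" "L ! 0 - lm > 0" using L0gt \<open>L ! 0 \<le> \<Delta>\<close> by auto
    have "(1 - g) * (L ! 0 - lm) * (\<Delta> - lm) \<le> (L ! 0 - \<delta>) * (\<Delta> - lm)"
      by (rule mult_right_mono[OF a]) (use p1 in simp)
    also have "\<dots> \<le> (\<Delta> - \<delta>) * (L ! 0 - lm)" by (rule b)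
    finally have "((1 - g) * (\<Delta> - lm)) * (L ! 0 - lm) \<le> (\<Delta> - \<delta>) * (L ! 0 - lm)" by (simp add: mult_ac)
    hence "(1 - g) * (\<Delta> - lm) \<le> (\<Delta> - \<delta>)" using p1(2) by (rule mult_right_le_imp_le)
    moreover have "\<Delta> - lm > 0" using p1 by simp
    ultimately show ?thesis by (simp add: pos_le_divide_eq)
  qed
  show "real n * \<delta> \<le> \<Delta>^2 + real n * lm^2"
  proof -
    define e where "e = (\<lambda>i j::nat. if j = i then 1 else (0::real))"
    have cfe: "es.cf (e i) k = q k i" if "i < n" for i k
      unfolding es.cf_def e_def using that by (simp add: sum_delta_mult1)
    have Axe: "es.Ax (e i) j = aa j i" if "i < n" for i j
      unfolding es.Ax_def e_def using that by (simp add: sum_delta_mult2)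
    have di: "(\<Sum>j<n. aa i j) = (\<Sum>k<n. (L ! k)^2 * (q k i)^2)" if "i < n" for i
    proof -
      have "(\<Sum>j<n. aa i j) = (\<Sum>j<n. (es.Ax (e i) j)^2)"
        using Axe[OF that] by (intro sum.cong refl) (metis aa01(2,3) power2_eq_square)
      also have "\<dots> = (\<Sum>k<n. (L ! k)^2 * (q k i)^2)" using es.norm_Ax[of "e i"] cfe[OF that] by simp
      finally show ?thesis .
    qed
    have "real n * \<delta> \<le> (\<Sum>i<n. \<Sum>j<n. aa i j)"
    proof -
      have "real n * \<delta> = (\<Sum>i<n. \<delta>)" by simp
      also have "\<dots> \<le> (\<Sum>i<n. \<Sum>j<n. aa i j)" by (intro sum_mono) (auto simp: dlo)
      finally show ?thesis .
    qed
    also have "\<dots> = (\<Sum>i<n. \<Sum>k<n. (L ! k)^2 * (q k i)^2)" by (rule sum.cong[OF refl]) (simp add: di)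
    also have "\<dots> = (\<Sum>k<n. (L ! k)^2 * (\<Sum>i<n. (q k i)^2))"
      by (subst sum.swap) (simp add: sum_distrib_left)
    also have "\<dots> = (\<Sum>k<n. (L ! k)^2)"
      by (intro sum.cong refl) (use O1 in \<open>simp add: power2_eq_square\<close>)
    also have "\<dots> = (L ! 0)^2 + (\<Sum>k\<in>{1..<n}. (L ! k)^2)" by (rule split)
    also have "\<dots> \<le> \<Delta>^2 + (\<Sum>k\<in>{1..<n}. lm^2)"
    proof (intro add_mono sum_mono)
      show "(L ! 0)^2 \<le> \<Delta>^2" using L0 by (metis abs_le_square_iff abs_of_nonneg Ldelta)
      fix k assume "k \<in> {1..<n}"
      thus "(L ! k)^2 \<le> lm^2" using lam[of k] lam0 by (metis abs_le_square_iff abs_of_nonneg atLeastLessThan_iff)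
    qed
    also have "\<dots> \<le> \<Delta>^2 + real n * lm^2" using nm by (simp add: algebra_simps)
    finally show ?thesis .
  qed
  fix S assume S: "S \<subseteq> {..<n}"
  define x where "x = (\<lambda>j. if j \<in> S then 1 else (0::real))"
  define s where "s = real (card S)"
  have finS: "finite S" using S finite_subset by blast
  have sx: "(\<Sum>j<n. (x j)^2) = s"
  proof -
    have "(\<Sum>j<n. (x j)^2) = (\<Sum>j<n. if j \<in> S then 1 else 0)" unfolding x_def by (intro sum.cong refl) auto
    also have "\<dots> = real (card {j \<in> {..<n}. j \<in> S})" by (rule card_as_sum[symmetric]) simp
    also have "{j \<in> {..<n}. j \<in> S} = S" using S by auto
    finally show ?thesis unfolding s_def .
  qed
  have Axc: "es.Ax x i = real (card (nbrs E i \<inter> S))" for i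
    unfolding es.Ax_def x_def card_nbrs_S ..
  define w where "w = (\<lambda>j. q 0 j - c0 / real n)"
  have c0q: "c0 = (\<Sum>j<n. q 0 j)" unfolding c0_def es.cf_def one_def by simp
  have q0: "(\<Sum>j<n. (q 0 j)^2) = 1" using O1 nm by (simp add: power2_eq_square)
  have sw: "(\<Sum>j<n. (w j)^2) = 1 - g"
  proof -
    have "(\<Sum>j<n. (w j)^2) = (\<Sum>j<n. (q 0 j)^2) - 2 * (c0 / real n) * (\<Sum>j<n. q 0 j) + real n * (c0 / real n)^2"
    proof -
      define cc where "cc = c0 / real n"
      have "(\<Sum>j<n. (q 0 j - cc)^2) = (\<Sum>j<n. (q 0 j)^2 - 2 * cc * q 0 j + cc^2)"
        by (intro sum.cong refl) (simp add: power2_diff algebra_simps)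
      also have "\<dots> = (\<Sum>j<n. (q 0 j)^2) - 2 * cc * (\<Sum>j<n. q 0 j) + real n * cc^2"
        by (simp add: sum.distrib sum_subtractf sum_distrib_left)
      finally show ?thesis unfolding w_def cc_def .
    qed
    also have "\<dots> = 1 - g" unfolding q0 c0q[symmetric] g_def using npos by (simp add: power2_eq_square field_simps)
    finally show ?thesis .
  qed
  have sxn: "(\<Sum>j<n. x j) = s"
  proof -
    have "(\<Sum>j<n. x j) = (\<Sum>j<n. (x j)^2)" by (intro sum.cong refl) (simp add: x_def)
    thus ?thesis using sx by simp
  qed
  have cx0: "es.cf x 0 = (\<Sum>j<n. x j * w j) + (c0 / real n) * s"
    unfolding es.cf_def w_def using sxn by (simp add: algebra_simps sum_subtractf sum_distrib_right[symmetric] sum_distrib_left[symmetric] sum_divide_distrib[symmetric])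
  have cs: "(\<Sum>j<n. x j * w j)^2 \<le> s * (1 - g)"
    using Cauchy_Schwarz_ineq_sum[of x w "{..<n}"] sx sw by simp
  have c2: "((c0 / real n) * s)^2 \<le> s^2 / real n"
  proof -
    have "((c0 / real n) * s)^2 = g * s^2 / real n" unfolding g_def using npos
      by (simp add: power2_eq_square field_simps)
    also have "\<dots> \<le> s^2 / real n" using g01 npos by (intro divide_right_mono) (auto intro: mult_left_le_one_le)
    finally show ?thesis .
  qed
  have cx0b: "(es.cf x 0)^2 \<le> 2 * s * ((\<Delta> - \<delta>) / (\<Delta> - lm)) + 2 * s^2 / real n"
  proof -
    have "(es.cf x 0)^2 \<le> 2 * (\<Sum>j<n. x j * w j)^2 + 2 * ((c0 / real n) * s)^2"
      unfolding cx0 by (smt (verit) sum_squares_bound power2_sum)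
    also have "\<dots> \<le> 2 * (s * (1 - g)) + 2 * (s^2 / real n)"
      using cs c2 by linarith
    also have "\<dots> \<le> 2 * s * ((\<Delta> - \<delta>) / (\<Delta> - lm)) + 2 * s^2 / real n"
    proof -
      have "s * (1 - g) \<le> s * ((\<Delta> - \<delta>) / (\<Delta> - lm))" by (rule mult_left_mono[OF tau]) (simp add: s_def)
      thus ?thesis by simp
    qed
    finally show ?thesis .
  qed
  have "(\<Sum>i<n. (real (card (nbrs E i \<inter> S)))^2) = (\<Sum>k<n. (L ! k)^2 * (es.cf x k)^2)"
    using es.norm_Ax[of x] unfolding Axc .
  also have "\<dots> = (L ! 0)^2 * (es.cf x 0)^2 + (\<Sum>k\<in>{1..<n}. (L ! k)^2 * (es.cf x k)^2)" by (rule split)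
  also have "\<dots> \<le> \<Delta>^2 * (es.cf x 0)^2 + (\<Sum>k\<in>{1..<n}. lm^2 * (es.cf x k)^2)"
  proof (intro add_mono sum_mono mult_right_mono)
    show "(L ! 0)^2 \<le> \<Delta>^2" using L0 by (metis abs_le_square_iff abs_of_nonneg Ldelta)
    fix k assume "k \<in> {1..<n}"
    thus "(L ! k)^2 \<le> lm^2" using lam[of k] lam0 by (metis abs_le_square_iff abs_of_nonneg atLeastLessThan_iff)
  qed auto
  also have "(\<Sum>k\<in>{1..<n}. lm^2 * (es.cf x k)^2) \<le> lm^2 * s"
  proof -
    have "(\<Sum>k\<in>{1..<n}. (es.cf x k)^2) \<le> (\<Sum>k<n. (es.cf x k)^2)"
      by (rule sum_mono2) auto
    thus ?thesis using es.norm_cf[of x] sx by (simp add: sum_distrib_left[symmetric] mult_left_mono)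
  qed
  finally show "(\<Sum>i<n. (real (card (nbrs E i \<inter> S)))^2)
           \<le> \<Delta>^2 * (2 * real (card S) * ((\<Delta> - \<delta>) / (\<Delta> - lm)) + 2 * (real (card S))^2 / real n) + lm^2 * real (card S)"
    using cx0b mult_left_mono[OF cx0b, of "\<Delta>^2"] unfolding s_def by simp
qed

end


definition stayF :: "nat \<Rightarrow> (nat \<Rightarrow> nat \<Rightarrow> bool) \<Rightarrow> real \<Rightarrow> nat set \<Rightarrow> nat \<Rightarrow> real" where
  "stayF n E q I u = (1 - q * real (card (nbrs E u \<inter> I)) / real (degree E u)) *
     (\<Prod>v \<in> I \<inter> nbrs E u. (1 - q / real (degree E v)))"

lemma pair_prob:
  fixes A :: "nat set"
  assumes N: "N \<noteq> {}" "finite N" and q: "0 \<le> q" "q \<le> 1"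
  shows "measure_pmf.prob (pair_pmf (pmf_of_set N) (bernoulli_pmf q)) {x. \<not> (fst x \<in> A \<and> snd x)}
     = 1 - q * real (card (N \<inter> A)) / real (card N)"
proof -
  let ?M = "pair_pmf (pmf_of_set N) (bernoulli_pmf q)"
  have "{x. \<not> (fst x \<in> A \<and> snd x)} = space (measure_pmf ?M) - (A \<times> {True})" by auto
  hence "measure_pmf.prob ?M {x. \<not> (fst x \<in> A \<and> snd x)} = 1 - measure_pmf.prob ?M (A \<times> {True})"
    using measure_pmf.prob_compl[of "A \<times> {True}" ?M] by simp
  also have "measure_pmf.prob ?M (A \<times> {True}) = measure_pmf.prob (pmf_of_set N) A * measure_pmf.prob (bernoulli_pmf q) {True}"
    by (rule measure_pmf_prob_product) auto
  also have "measure_pmf.prob (bernoulli_pmf q) {True} = q" using q by (simp add: measure_pmf_single)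
  also have "measure_pmf.prob (pmf_of_set N) A = real (card (N \<inter> A)) / real (card N)"
    using measure_pmf_of_set[OF N] .
  finally show ?thesis by simp
qed

context
  fixes n :: nat and E :: "nat \<Rightarrow> nat \<Rightarrow> bool" and q :: real
  assumes G: "simple_graph_on n E" and nbne: "\<And>v. v < n \<Longrightarrow> nbrs E v \<noteq> {}"
    and q: "0 \<le> q" "q \<le> 1"
begin

lemma nbfin: "finite (nbrs E v)"
proof -
  have "nbrs E v \<subseteq> {..<n}" using G unfolding simple_graph_on_def nbrs_def by auto
  thus ?thesis using finite_subset by blast
qed

lemma stay_prob:
  assumes I: "I \<subseteq> {0..<n}" and u: "u < n" "u \<notin> I"
  shows "measure_pmf.prob (pp_choices n E q) {\<omega>. u \<notin> pp_step n I \<omega>} = stayF n E q I u"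
proof -
  define B where "B = (\<lambda>x. if x = u then {y. \<not> (fst y \<in> I \<and> snd y)}
      else if x \<in> I then {y. \<not> (fst y = u \<and> snd y)} else (UNIV :: (nat \<times> bool) set))"
  have ev: "{\<omega>. u \<notin> pp_step n I \<omega>} = Pi {0..<n} B"
  proof (rule Set.set_eqI)
    fix \<omega> :: "nat \<Rightarrow> nat \<times> bool"
    have "u \<notin> pp_step n I \<omega> \<longleftrightarrow> \<not> (fst (\<omega> u) \<in> I \<and> snd (\<omega> u)) \<and> (\<forall>v\<in>I. \<not> (fst (\<omega> v) = u \<and> snd (\<omega> v)))"
      unfolding pp_step_def using u by auto
    also have "\<dots> \<longleftrightarrow> \<omega> \<in> Pi {0..<n} B"
    proof
      assume H: "\<not> (fst (\<omega> u) \<in> I \<and> snd (\<omega> u)) \<and> (\<forall>v\<in>I. \<not> (fst (\<omega> v) = u \<and> snd (\<omega> v)))"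
      show "\<omega> \<in> Pi {0..<n} B" unfolding Pi_def B_def using H by auto
    next
      assume H: "\<omega> \<in> Pi {0..<n} B"
      have "\<omega> u \<in> B u" using H u by (auto simp: Pi_def)
      hence 1: "\<not> (fst (\<omega> u) \<in> I \<and> snd (\<omega> u))" unfolding B_def by simp
      have "\<omega> v \<in> B v" if "v \<in> I" for v using H that I by (auto simp: Pi_def)
      hence 2: "\<forall>v\<in>I. \<not> (fst (\<omega> v) = u \<and> snd (\<omega> v))" using u(2) unfolding B_def
        by (metis (mono_tags, lifting) mem_Collect_eq)
      show "\<not> (fst (\<omega> u) \<in> I \<and> snd (\<omega> u)) \<and> (\<forall>v\<in>I. \<not> (fst (\<omega> v) = u \<and> snd (\<omega> v)))"
        using 1 2 by blast
    qed
    finally show "\<omega> \<in> {\<omega>. u \<notin> pp_step n I \<omega>} \<longleftrightarrow> \<omega> \<in> Pi {0..<n} B" by simp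
  qed
  let ?p = "\<lambda>v. pair_pmf (pmf_of_set (nbrs E v)) (bernoulli_pmf q)"
  have "measure_pmf.prob (pp_choices n E q) {\<omega>. u \<notin> pp_step n I \<omega>} = (\<Prod>x\<in>{0..<n}. measure_pmf.prob (?p x) (B x))"
    unfolding ev pp_choices_def by (rule measure_Pi_pmf_Pi) simp
  also have "\<dots> = measure_pmf.prob (?p u) (B u) * (\<Prod>x\<in>{0..<n} - {u}. measure_pmf.prob (?p x) (B x))"
    by (rule prod.remove) (use u in auto)
  also have "measure_pmf.prob (?p u) (B u) = 1 - q * real (card (nbrs E u \<inter> I)) / real (degree E u)"
    unfolding B_def degree_def using pair_prob[OF nbne[OF u(1)] nbfin q] by simp
  also have "(\<Prod>x\<in>{0..<n} - {u}. measure_pmf.prob (?p x) (B x)) = (\<Prod>x\<in>{0..<n} - {u}. if x \<in> I \<inter> nbrs E u then 1 - q / real (degree E x) else 1)"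
  proof (rule prod.cong[OF refl])
    fix x assume x: "x \<in> {0..<n} - {u}"
    show "measure_pmf.prob (?p x) (B x) = (if x \<in> I \<inter> nbrs E u then 1 - q / real (degree E x) else 1)"
    proof (cases "x \<in> I")
      case True
      have "measure_pmf.prob (?p x) (B x) = measure_pmf.prob (?p x) {y. \<not> (fst y \<in> {u} \<and> snd y)}"
        unfolding B_def using x True by (simp add: conj_commute)
      also have "\<dots> = 1 - q * real (card (nbrs E x \<inter> {u})) / real (card (nbrs E x))"
        by (rule pair_prob[OF nbne nbfin q]) (use x in auto)
      also have "nbrs E x \<inter> {u} = (if x \<in> nbrs E u then {u} else {})"
        using G unfolding nbrs_def simple_graph_on_def by auto
      finally show ?thesis using True unfolding degree_def by auto
    next
      case False
      then show ?thesis unfolding B_def using x by auto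
    qed
  qed
  also have "\<dots> = (\<Prod>v\<in>I \<inter> nbrs E u. 1 - q / real (degree E v))"
  proof -
    have "(\<Prod>x\<in>{0..<n} - {u}. if x \<in> I \<inter> nbrs E u then 1 - q / real (degree E x) else 1)
        = (\<Prod>v\<in>({0..<n} - {u}) \<inter> (I \<inter> nbrs E u). 1 - q / real (degree E v))"
      by (rule prod.inter_restrict[symmetric]) simp
    also have "({0..<n} - {u}) \<inter> (I \<inter> nbrs E u) = I \<inter> nbrs E u" using I u by auto
    finally show ?thesis .
  qed
  finally show ?thesis unfolding stayF_def by simp
qed

lemma integrable_pp: "integrable (measure_pmf (pp_choices n E q)) (\<lambda>\<omega>. if P \<omega> then 1 else (0::real))"
  by (rule measure_pmf.integrable_const_bound[where B=1]) auto

lemma exp_indicator: "measure_pmf.expectation (pp_choices n E q) (\<lambda>\<omega>. if P \<omega> then 1 else (0::real))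
   = measure_pmf.prob (pp_choices n E q) {\<omega>. P \<omega>}"
proof -
  have "(\<lambda>\<omega>. if P \<omega> then 1 else (0::real)) = indicator {\<omega>. P \<omega>}" by (auto simp: indicator_def)
  thus ?thesis by simp
qed

lemma step_sub: "I \<subseteq> {0..<n} \<Longrightarrow> pp_step n I \<omega> \<subseteq> {0..<n}" unfolding pp_step_def by auto

lemma exp_new:
  assumes I: "I \<subseteq> {0..<n}"
  shows "measure_pmf.expectation (pp_next n E q I) (\<lambda>J. real (card (J - I)))
     = (\<Sum>u\<in>{0..<n} - I. 1 - stayF n E q I u)"
proof -
  have c: "real (card (pp_step n I \<omega> - I)) = (\<Sum>u\<in>{0..<n} - I. if u \<in> pp_step n I \<omega> then 1 else 0)" for \<omega>
  proof -
    have "pp_step n I \<omega> - I = {u \<in> {0..<n} - I. u \<in> pp_step n I \<omega>}" using step_sub[OF I, of \<omega>] by auto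
    moreover have "real (card {u \<in> {0..<n} - I. u \<in> pp_step n I \<omega>}) = (\<Sum>u\<in>{0..<n} - I. if u \<in> pp_step n I \<omega> then 1 else 0)"
      using sum.inter_filter[of "{0..<n} - I" "\<lambda>_. (1::real)" "\<lambda>u. u \<in> pp_step n I \<omega>"] by simp
    ultimately show ?thesis by simp
  qed
  have "measure_pmf.expectation (pp_next n E q I) (\<lambda>J. real (card (J - I)))
      = measure_pmf.expectation (pp_choices n E q) (\<lambda>\<omega>. \<Sum>u\<in>{0..<n} - I. if u \<in> pp_step n I \<omega> then 1 else 0)"
    unfolding pp_next_def integral_map_pmf c ..
  also have "\<dots> = (\<Sum>u\<in>{0..<n} - I. measure_pmf.expectation (pp_choices n E q) (\<lambda>\<omega>. if u \<in> pp_step n I \<omega> then 1 else 0))"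
    by (rule Bochner_Integration.integral_sum) (rule integrable_pp)
  also have "\<dots> = (\<Sum>u\<in>{0..<n} - I. 1 - stayF n E q I u)"
  proof (rule sum.cong[OF refl])
    fix u assume u: "u \<in> {0..<n} - I"
    have "measure_pmf.expectation (pp_choices n E q) (\<lambda>\<omega>. if u \<in> pp_step n I \<omega> then 1 else 0)
       = measure_pmf.prob (pp_choices n E q) {\<omega>. u \<in> pp_step n I \<omega>}" by (rule exp_indicator)
    also have "{\<omega>. u \<in> pp_step n I \<omega>} = space (measure_pmf (pp_choices n E q)) - {\<omega>. u \<notin> pp_step n I \<omega>}" by auto
    also have "measure_pmf.prob (pp_choices n E q) \<dots> = 1 - measure_pmf.prob (pp_choices n E q) {\<omega>. u \<notin> pp_step n I \<omega>}"
      by (rule measure_pmf.prob_compl) simp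
    also have "\<dots> = 1 - stayF n E q I u" using stay_prob[OF I] u by simp
    finally show "measure_pmf.expectation (pp_choices n E q) (\<lambda>\<omega>. if u \<in> pp_step n I \<omega> then 1 else 0) = 1 - stayF n E q I u" .
  qed
  finally show ?thesis .
qed

lemma exp_unf:
  assumes I: "I \<subseteq> {0..<n}"
  shows "measure_pmf.expectation (pp_next n E q I) (\<lambda>J. real (card ({0..<n} - J)))
     = (\<Sum>u\<in>{0..<n} - I. stayF n E q I u)"
proof -
  have c: "real (card ({0..<n} - pp_step n I \<omega>)) = (\<Sum>u\<in>{0..<n} - I. if u \<notin> pp_step n I \<omega> then 1 else 0)" for \<omega>
  proof -
    have "{0..<n} - pp_step n I \<omega> = {u \<in> {0..<n} - I. u \<notin> pp_step n I \<omega>}" unfolding pp_step_def by auto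
    moreover have "real (card {u \<in> {0..<n} - I. u \<notin> pp_step n I \<omega>}) = (\<Sum>u\<in>{0..<n} - I. if u \<notin> pp_step n I \<omega> then 1 else 0)"
      using sum.inter_filter[of "{0..<n} - I" "\<lambda>_. (1::real)" "\<lambda>u. u \<notin> pp_step n I \<omega>"] by simp
    ultimately show ?thesis by simp
  qed
  have "measure_pmf.expectation (pp_next n E q I) (\<lambda>J. real (card ({0..<n} - J)))
      = measure_pmf.expectation (pp_choices n E q) (\<lambda>\<omega>. \<Sum>u\<in>{0..<n} - I. if u \<notin> pp_step n I \<omega> then 1 else 0)"
    unfolding pp_next_def integral_map_pmf c ..
  also have "\<dots> = (\<Sum>u\<in>{0..<n} - I. measure_pmf.expectation (pp_choices n E q) (\<lambda>\<omega>. if u \<notin> pp_step n I \<omega> then 1 else 0))"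
    by (rule Bochner_Integration.integral_sum) (rule integrable_pp)
  also have "\<dots> = (\<Sum>u\<in>{0..<n} - I. stayF n E q I u)"
  proof (rule sum.cong[OF refl])
    fix u assume u: "u \<in> {0..<n} - I"
    show "measure_pmf.expectation (pp_choices n E q) (\<lambda>\<omega>. if u \<notin> pp_step n I \<omega> then 1 else 0) = stayF n E q I u"
      using exp_indicator stay_prob[OF I] u by simp
  qed
  finally show ?thesis .
qed

end


lemma prod_lower:
  fixes b :: "'a \<Rightarrow> real"
  assumes "finite A" "\<And>a. a \<in> A \<Longrightarrow> 0 \<le> b a \<and> b a \<le> 1"
  shows "1 - (\<Sum>a\<in>A. b a) \<le> (\<Prod>a\<in>A. 1 - b a)"
  using assms
proof (induction A rule: finite_induct)
  case (insert x F)
  have IH: "1 - (\<Sum>a\<in>F. b a) \<le> (\<Prod>a\<in>F. 1 - b a)" using insert by auto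
  have bx: "0 \<le> b x" "b x \<le> 1" using insert by auto
  have S0: "0 \<le> (\<Sum>a\<in>F. b a)" using insert by (intro sum_nonneg) auto
  have "1 - (\<Sum>a\<in>insert x F. b a) \<le> (1 - b x) * (1 - (\<Sum>a\<in>F. b a))"
    using insert bx S0 by (simp add: algebra_simps)
  also have "\<dots> \<le> (1 - b x) * (\<Prod>a\<in>F. 1 - b a)" using IH bx by (intro mult_left_mono) auto
  finally show ?case using insert by simp
qed simp

lemma prod_upper:
  fixes b :: "'a \<Rightarrow> real"
  assumes "finite A" "\<And>a. a \<in> A \<Longrightarrow> 0 \<le> b a \<and> b a \<le> 1"
  shows "(\<Prod>a\<in>A. 1 - b a) \<le> 1 - (\<Sum>a\<in>A. b a) + (\<Sum>a\<in>A. b a)^2 / 2"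
  using assms
proof (induction A rule: finite_induct)
  case (insert x F)
  define S where "S = (\<Sum>a\<in>F. b a)"
  have IH: "(\<Prod>a\<in>F. 1 - b a) \<le> 1 - S + S^2 / 2" using insert unfolding S_def by auto
  have bx: "0 \<le> b x" "b x \<le> 1" using insert by auto
  have S0: "0 \<le> S" unfolding S_def using insert by (intro sum_nonneg) auto
  have "(\<Prod>a\<in>insert x F. 1 - b a) = (1 - b x) * (\<Prod>a\<in>F. 1 - b a)" using insert by simp
  also have "\<dots> \<le> (1 - b x) * (1 - S + S^2 / 2)" using IH bx by (intro mult_left_mono) auto
  also have "\<dots> \<le> 1 - (S + b x) + (S + b x)^2 / 2"
  proof -
    have "0 \<le> b x * b x / 2 + b x * S * S / 2" using bx S0 by simp
    thus ?thesis by (simp add: power2_eq_square algebra_simps)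
  qed
  finally show ?case using insert unfolding S_def by (simp add: add.commute)
qed simp

lemma prod_01:
  fixes b :: "'a \<Rightarrow> real"
  assumes "\<And>a. a \<in> A \<Longrightarrow> 0 \<le> b a \<and> b a \<le> 1"
  shows "0 \<le> (\<Prod>a\<in>A. 1 - b a)" "(\<Prod>a\<in>A. 1 - b a) \<le> 1"
  using assms by (auto intro: prod_nonneg prod_le_1)

lemma card_as_sum':
  assumes "finite A" shows "real (card {j \<in> A. P j}) = (\<Sum>j\<in>A. if P j then 1 else 0)"
  using sum.inter_filter[OF assms, of "\<lambda>_. (1::real)" P] by simp

lemma double_count:
  fixes g :: "nat \<Rightarrow> real"
  assumes fin: "finite A" "finite B" and sym: "\<And>u v. E u v = E v u"
  shows "(\<Sum>u\<in>A. \<Sum>v\<in>B \<inter> nbrs E u. g v) = (\<Sum>v\<in>B. real (card (nbrs E v \<inter> A)) * g v)"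
proof -
  have "(\<Sum>u\<in>A. \<Sum>v\<in>B \<inter> nbrs E u. g v) = (\<Sum>u\<in>A. \<Sum>v\<in>B. if E u v then g v else 0)"
  proof (rule sum.cong[OF refl])
    fix u assume "u \<in> A"
    have "B \<inter> nbrs E u = {v \<in> B. E u v}" unfolding nbrs_def by auto
    thus "(\<Sum>v\<in>B \<inter> nbrs E u. g v) = (\<Sum>v\<in>B. if E u v then g v else 0)"
      using sum.inter_filter[OF fin(2), of g "E u"] by simp
  qed
  also have "\<dots> = (\<Sum>v\<in>B. \<Sum>u\<in>A. if E u v then g v else 0)" by (rule sum.swap)
  also have "\<dots> = (\<Sum>v\<in>B. real (card (nbrs E v \<inter> A)) * g v)"
  proof (rule sum.cong[OF refl])
    fix v assume "v \<in> B"
    have "nbrs E v \<inter> A = {u \<in> A. E u v}" unfolding nbrs_def using sym by auto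
    hence "real (card (nbrs E v \<inter> A)) = (\<Sum>u\<in>A. if E u v then 1 else 0)"
      using card_as_sum'[OF fin(1), of "\<lambda>u. E u v"] by simp
    moreover have "(\<Sum>u\<in>A. if E u v then g v else 0) = (\<Sum>u\<in>A. (if E u v then 1 else 0) * g v)"
      by (intro sum.cong) auto
    ultimately show "(\<Sum>u\<in>A. if E u v then g v else 0) = real (card (nbrs E v \<inter> A)) * g v"
      by (simp add: sum_distrib_right)
  qed
  finally show ?thesis .
qed


lemma partA:
  fixes n :: nat and E :: "nat \<Rightarrow> nat \<Rightarrow> bool" and q \<delta> \<Delta> \<epsilon> :: real and I :: "nat set"
  assumes G: "simple_graph_on n E"
   and deg: "\<And>v. v < n \<Longrightarrow> \<delta> \<le> real (degree E v) \<and> real (degree E v) \<le> \<Delta>"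
   and d1: "1 \<le> \<delta>" and dD: "\<delta> \<le> \<Delta>" and q: "0 < q" "q \<le> 1" and I: "I \<subseteq> {0..<n}" and eps: "0 \<le> \<epsilon>"
   and K2: "(\<Sum>i<n. (real (card (nbrs E i \<inter> I)))^2) \<le> \<epsilon> * \<Delta>^2 * real (card I)"
  shows "\<bar>(\<Sum>u\<in>{0..<n} - I. 1 - stayF n E q I u) - 2 * q * real (card I)\<bar>
     \<le> real (card I) * ((\<Delta> / \<delta> - 1) + 2 * sqrt \<epsilon> * (\<Delta> / \<delta>) + 2 * \<epsilon> * (\<Delta> / \<delta>)^2)"
proof -
  define U where "U = {0..<n} - I"
  define s where "s = real (card I)"
  define r where "r = \<Delta> / \<delta>"
  define d where "d = (\<lambda>v. real (degree E v))"
  define k where "k = (\<lambda>v. real (card (nbrs E v \<inter> I)))"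
  define x where "x = (\<lambda>u. q * k u / d u)"
  define S where "S = (\<lambda>u. \<Sum>v\<in>I \<inter> nbrs E u. q / d v)"
  define P where "P = (\<lambda>u. \<Prod>v\<in>I \<inter> nbrs E u. 1 - q / d v)"
  define T where "T = (\<Sum>v\<in>I. k v)"
  have finI: "finite I" using I finite_subset by blast
  have finU: "finite U" unfolding U_def by simp
  have symE: "E u v = E v u" for u v using G unfolding simple_graph_on_def by blast
  have nbsub: "nbrs E v \<subseteq> {0..<n}" for v using G unfolding simple_graph_on_def nbrs_def by auto
  have nbfin: "finite (nbrs E v)" for v using nbsub finite_subset by blast
  have dpos: "\<delta> \<le> d v" "d v \<le> \<Delta>" "0 < d v" if "v < n" for v using deg[OF that] d1 unfolding d_def by auto
  have Dpos: "\<delta> \<le> \<Delta>" by (rule dD)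
  have k0: "0 \<le> k v" for v unfolding k_def by simp
  have kd: "k v \<le> d v" for v unfolding k_def d_def degree_def
    using card_mono[OF nbfin, of "nbrs E v \<inter> I"] by auto
  have cardU: "real (card (nbrs E v \<inter> U)) = d v - k v" if "v < n" for v
  proof -
    have "nbrs E v = (nbrs E v \<inter> I) \<union> (nbrs E v \<inter> U)" using nbsub[of v] unfolding U_def by auto
    moreover have "(nbrs E v \<inter> I) \<inter> (nbrs E v \<inter> U) = {}" unfolding U_def by auto
    ultimately have "card (nbrs E v) = card (nbrs E v \<inter> I) + card (nbrs E v \<inter> U)"
      by (metis card_Un_disjoint finite_Int nbfin)
    thus ?thesis unfolding d_def k_def degree_def by simp
  qed
  have stay: "stayF n E q I u = (1 - x u) * P u" for u
    unfolding stayF_def x_def P_def k_def d_def by simp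
  have bv: "0 \<le> q / d v \<and> q / d v \<le> 1" if "v \<in> I \<inter> nbrs E u" for u v
  proof -
    have "v < n" using that I by auto
    thus ?thesis using dpos[of v] q d1 by (auto simp: divide_le_eq_1)
  qed
  have cardIN: "real (card (I \<inter> nbrs E u)) = k u" for u unfolding k_def by (simp add: Int_commute)
  have Sle: "S u \<le> q * k u / \<delta>" for u
  proof -
    have "S u \<le> (\<Sum>v\<in>I \<inter> nbrs E u. q / \<delta>)" unfolding S_def
    proof (rule sum_mono)
      fix v assume v: "v \<in> I \<inter> nbrs E u"
      hence "v < n" using I by auto
      thus "q / d v \<le> q / \<delta>" using dpos[of v] q d1 by (intro divide_left_mono) auto
    qed
    also have "\<dots> = q * k u / \<delta>" using cardIN[of u] by simp
    finally show ?thesis .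
  qed
  have S0: "0 \<le> S u" for u unfolding S_def using bv by (intro sum_nonneg) auto
  have xle: "x u \<le> q * k u / \<delta>" if "u < n" for u
    unfolding x_def using dpos[OF that] k0[of u] q d1
    by (intro divide_left_mono) auto
  have x01: "0 \<le> x u" "x u \<le> 1" if "u < n" for u
  proof -
    show "0 \<le> x u" unfolding x_def using q k0[of u] dpos[OF that] by simp
    have "q * k u \<le> 1 * d u" using q kd[of u] k0[of u] by (intro mult_mono) auto
    thus "x u \<le> 1" unfolding x_def using dpos[OF that] by (simp add: divide_le_eq_1)
  qed
  have P01: "0 \<le> P u" "P u \<le> 1" for u unfolding P_def using prod_01[of "I \<inter> nbrs E u" "\<lambda>v. q / d v"] bv by auto
  have Plo: "1 - S u \<le> P u" for u unfolding P_def S_def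
    by (rule prod_lower) (use finI bv in auto)
  have Pup: "P u \<le> 1 - S u + (S u)^2 / 2" for u unfolding P_def S_def
    by (rule prod_upper) (use finI bv in auto)
  have up_u: "1 - (1 - x u) * P u \<le> x u + S u" if "u < n" for u
  proof -
    have "1 - (1 - x u) * P u = x u * P u + (1 - P u)" by (simp add: algebra_simps)
    also have "\<dots> \<le> x u * 1 + S u" using x01[OF that] P01[of u] Plo[of u]
      by (intro add_mono mult_left_mono) auto
    finally show ?thesis by simp
  qed
  have lo_u: "x u + S u - 2 * (k u / \<delta>)^2 \<le> 1 - (1 - x u) * P u" if "u < n" for u
  proof -
    have "(1 - x u) * P u \<le> (1 - x u) * (1 - S u + (S u)^2 / 2)"
      using x01[OF that] Pup[of u] by (intro mult_left_mono) auto
    also have "\<dots> = 1 - x u - S u + x u * S u + (1 - x u) * ((S u)^2 / 2)" by (simp add: algebra_simps)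
    also have "\<dots> \<le> 1 - x u - S u + x u * S u + (S u)^2"
    proof -
      have "(1 - x u) * ((S u)^2 / 2) \<le> 1 * ((S u)^2 / 2)"
        using x01[OF that] by (intro mult_right_mono) auto
      moreover have "0 \<le> (S u)^2" by simp
      ultimately show ?thesis by linarith
    qed
    also have "\<dots> \<le> 1 - x u - S u + 2 * (k u / \<delta>)^2"
    proof -
      have kq: "q * k u / \<delta> \<le> k u / \<delta>" using q k0[of u] d1 by (intro divide_right_mono) (auto simp: mult_left_le_one_le)
      have a: "x u * S u \<le> (k u / \<delta>) * (k u / \<delta>)"
        using xle[OF that] Sle[of u] kq x01[OF that] S0[of u] by (intro mult_mono) auto
      have b: "(S u)^2 \<le> (k u / \<delta>)^2"
        using Sle[of u] kq S0[of u] by (intro power_mono) auto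
      show ?thesis using a b by (simp add: power2_eq_square)
    qed
    finally show ?thesis by simp
  qed
  have sumk: "(\<Sum>u\<in>U. k u) = (\<Sum>v\<in>I. d v - k v)"
  proof -
    have "(\<Sum>u\<in>U. k u) = (\<Sum>u\<in>U. \<Sum>v\<in>I \<inter> nbrs E u. (1::real))" using cardIN by simp
    also have "\<dots> = (\<Sum>v\<in>I. real (card (nbrs E v \<inter> U)) * 1)"
      by (rule double_count[OF finU finI]) (rule symE)
    also have "\<dots> = (\<Sum>v\<in>I. d v - k v)" using cardU I by (intro sum.cong) auto
    finally show ?thesis .
  qed
  have sumS: "(\<Sum>u\<in>U. S u) = q * s - q * (\<Sum>v\<in>I. k v / d v)"
  proof -
    have "(\<Sum>u\<in>U. S u) = (\<Sum>v\<in>I. real (card (nbrs E v \<inter> U)) * (q / d v))"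
      unfolding S_def by (rule double_count[OF finU finI]) (rule symE)
    also have "\<dots> = (\<Sum>v\<in>I. q - q * (k v / d v))"
    proof (rule sum.cong[OF refl])
      fix v assume "v \<in> I"
      hence v: "v < n" using I by auto
      show "real (card (nbrs E v \<inter> U)) * (q / d v) = q - q * (k v / d v)"
        unfolding cardU[OF v] using dpos[OF v] by (simp add: field_simps)
    qed
    also have "\<dots> = q * s - q * (\<Sum>v\<in>I. k v / d v)" unfolding s_def
      by (simp add: sum_subtractf sum_distrib_left)
    finally show ?thesis .
  qed
  have T0: "0 \<le> T" unfolding T_def by (intro sum_nonneg k0)
  have kdsum: "0 \<le> (\<Sum>v\<in>I. k v / d v)" "(\<Sum>v\<in>I. k v / d v) \<le> T / \<delta>"
  proof -
    show "0 \<le> (\<Sum>v\<in>I. k v / d v)"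
    proof (intro sum_nonneg)
      fix v assume "v \<in> I"
      hence "v < n" using I by auto
      thus "0 \<le> k v / d v" using k0[of v] dpos[of v] by simp
    qed
    have "(\<Sum>v\<in>I. k v / d v) \<le> (\<Sum>v\<in>I. k v / \<delta>)"
    proof (rule sum_mono)
      fix v assume "v \<in> I"
      hence v: "v < n" using I by auto
      show "k v / d v \<le> k v / \<delta>" using dpos[OF v] k0[of v] d1 by (intro divide_left_mono) auto
    qed
    thus "(\<Sum>v\<in>I. k v / d v) \<le> T / \<delta>" unfolding T_def by (simp add: sum_divide_distrib)
  qed
  have sumI_d: "\<delta> * s \<le> (\<Sum>v\<in>I. d v)" "(\<Sum>v\<in>I. d v) \<le> \<Delta> * s"
  proof -
    have "(\<Sum>v\<in>I. \<delta>) \<le> (\<Sum>v\<in>I. d v)" using dpos I by (intro sum_mono) auto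
    thus "\<delta> * s \<le> (\<Sum>v\<in>I. d v)" unfolding s_def by (simp add: mult.commute)
    have "(\<Sum>v\<in>I. d v) \<le> (\<Sum>v\<in>I. \<Delta>)" using dpos I by (intro sum_mono) auto
    thus "(\<Sum>v\<in>I. d v) \<le> \<Delta> * s" unfolding s_def by (simp add: mult.commute)
  qed
  have K2I: "(\<Sum>v\<in>I. (k v)^2) \<le> \<epsilon> * \<Delta>^2 * s"
  proof -
    have "(\<Sum>v\<in>I. (k v)^2) \<le> (\<Sum>v<n. (k v)^2)" using I by (intro sum_mono2) auto
    thus ?thesis using K2 unfolding k_def s_def by simp
  qed
  have K2U: "(\<Sum>u\<in>U. (k u)^2) \<le> \<epsilon> * \<Delta>^2 * s"
  proof -
    have "(\<Sum>v\<in>U. (k v)^2) \<le> (\<Sum>v<n. (k v)^2)" unfolding U_def by (intro sum_mono2) auto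
    thus ?thesis using K2 unfolding k_def s_def by simp
  qed
  have Tb: "T \<le> sqrt \<epsilon> * \<Delta> * s"
  proof -
    have "T^2 \<le> (\<Sum>v\<in>I. 1^2) * (\<Sum>v\<in>I. (k v)^2)"
      unfolding T_def using Cauchy_Schwarz_ineq_sum[of "\<lambda>_. 1" k I] by simp
    also have "\<dots> = s * (\<Sum>v\<in>I. (k v)^2)" unfolding s_def by simp
    also have "\<dots> \<le> s * (\<epsilon> * \<Delta>^2 * s)" using K2I unfolding s_def by (intro mult_left_mono) auto
    also have "\<dots> = (sqrt \<epsilon> * \<Delta> * s)^2" using eps by (simp add: power_mult_distrib power2_eq_square)
    finally have "T^2 \<le> (sqrt \<epsilon> * \<Delta> * s)^2" .
    moreover have "0 \<le> sqrt \<epsilon> * \<Delta> * s" using eps Dpos d1 unfolding s_def by simp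
    ultimately show ?thesis by (rule power2_le_imp_le)
  qed
  define Ex where "Ex = (\<Sum>u\<in>U. 1 - (1 - x u) * P u)"
  have EX: "(\<Sum>u\<in>{0..<n} - I. 1 - stayF n E q I u) = Ex" unfolding Ex_def U_def stay ..
  have upper: "Ex \<le> (\<Sum>u\<in>U. x u) + (\<Sum>u\<in>U. S u)"
    unfolding Ex_def sum.distrib[symmetric] using up_u U_def by (intro sum_mono) auto
  have lower: "(\<Sum>u\<in>U. x u) + (\<Sum>u\<in>U. S u) - 2 * ((\<Sum>u\<in>U. (k u)^2) / \<delta>^2) \<le> Ex"
  proof -
    have "(\<Sum>u\<in>U. x u + S u - 2 * (k u / \<delta>)^2) \<le> Ex"
      unfolding Ex_def using lo_u U_def by (intro sum_mono) auto
    moreover have "(\<Sum>u\<in>U. x u + S u - 2 * (k u / \<delta>)^2) = (\<Sum>u\<in>U. x u) + (\<Sum>u\<in>U. S u) - 2 * (\<Sum>u\<in>U. (k u / \<delta>)^2)"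
      by (simp add: sum.distrib sum_subtractf sum_distrib_left)
    moreover have "(\<Sum>u\<in>U. (k u / \<delta>)^2) = (\<Sum>u\<in>U. (k u)^2) / \<delta>^2"
      by (simp add: power_divide sum_divide_distrib)
    ultimately show ?thesis by simp
  qed
  have sx_up: "(\<Sum>u\<in>U. x u) \<le> q / \<delta> * (\<Sum>u\<in>U. k u)"
  proof -
    have "(\<Sum>u\<in>U. x u) \<le> (\<Sum>u\<in>U. q / \<delta> * k u)"
      using xle U_def by (intro sum_mono) auto
    thus ?thesis by (simp add: sum_distrib_left)
  qed
  have sx_lo: "q / \<Delta> * (\<Sum>u\<in>U. k u) \<le> (\<Sum>u\<in>U. x u)"
  proof -
    have "(\<Sum>u\<in>U. q / \<Delta> * k u) \<le> (\<Sum>u\<in>U. x u)"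
    proof (rule sum_mono)
      fix u assume "u \<in> U"
      hence u: "u < n" unfolding U_def by auto
      have "q * k u / \<Delta> \<le> q * k u / d u"
        by (rule divide_left_mono) (use dpos[OF u] q k0[of u] d1 in auto)
      thus "q / \<Delta> * k u \<le> x u" unfolding x_def by simp
    qed
    thus ?thesis by (simp add: sum_distrib_left)
  qed
  have sk_up: "(\<Sum>u\<in>U. k u) \<le> \<Delta> * s"
  proof -
    have "(\<Sum>v\<in>I. d v - k v) \<le> (\<Sum>v\<in>I. d v)" by (intro sum_mono) (use k0 in auto)
    thus ?thesis using sumk sumI_d(2) by linarith
  qed
  have sk_lo: "\<delta> * s - T \<le> (\<Sum>u\<in>U. k u)" using sumk sumI_d unfolding T_def by (simp add: sum_subtractf)
  have Dp: "0 < \<Delta>" using Dpos d1 by simp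
  have r1: "1 \<le> r" unfolding r_def using Dpos d1 by simp
  have s0: "0 \<le> s" unfolding s_def by simp
  have ub: "Ex - 2 * q * s \<le> s * (r - 1)"
  proof -
    have h1: "q / \<delta> * (\<Sum>u\<in>U. k u) \<le> q / \<delta> * (\<Delta> * s)"
      by (rule mult_left_mono[OF sk_up]) (use q d1 in simp)
    have h2: "0 \<le> q * (\<Sum>v\<in>I. k v / d v)" using q kdsum(1) by simp
    have "Ex \<le> q / \<delta> * (\<Delta> * s) + q * s"
      using upper sx_up sumS h1 h2 by linarith
    moreover have "q / \<delta> * (\<Delta> * s) = q * s * r" unfolding r_def by (simp add: divide_inverse mult_ac)
    ultimately have "Ex - 2 * q * s \<le> q * (s * (r - 1))" by (simp add: algebra_simps)
    also have "\<dots> \<le> 1 * (s * (r - 1))" using q r1 s0 by (intro mult_right_mono) auto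
    finally show ?thesis by simp
  qed
  have lb: "2 * q * s - Ex \<le> s * (r - 1) + 2 * sqrt \<epsilon> * r * s + 2 * \<epsilon> * r^2 * s"
  proof -
    have a: "q / \<Delta> * (\<delta> * s - T) \<le> (\<Sum>u\<in>U. x u)"
      using sx_lo mult_left_mono[OF sk_lo, of "q / \<Delta>"] q Dp by simp
    have b: "q * s - q * (T / \<delta>) \<le> (\<Sum>u\<in>U. S u)"
    proof -
      have "q * (\<Sum>v\<in>I. k v / d v) \<le> q * (T / \<delta>)" using kdsum(2) q by (intro mult_left_mono) auto
      thus ?thesis using sumS by linarith
    qed
    have c: "(\<Sum>u\<in>U. (k u)^2) / \<delta>^2 \<le> \<epsilon> * r^2 * s"
    proof -
      have "(\<Sum>u\<in>U. (k u)^2) / \<delta>^2 \<le> (\<epsilon> * \<Delta>^2 * s) / \<delta>^2"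
        by (rule divide_right_mono[OF K2U]) simp
      also have "\<dots> = \<epsilon> * r^2 * s" unfolding r_def power_divide by (simp add: divide_inverse mult_ac)
      finally show ?thesis .
    qed
    have "2 * q * s - Ex \<le> 2 * q * s - (q / \<Delta> * (\<delta> * s - T) + (q * s - q * (T / \<delta>)) - 2 * (\<epsilon> * r^2 * s))"
      using lower a b c by linarith
    also have "\<dots> = q * s * (1 - \<delta> / \<Delta>) + q * (T / \<Delta>) + q * (T / \<delta>) + 2 * \<epsilon> * r^2 * s"
      by (simp add: divide_inverse algebra_simps)
    also have "\<dots> \<le> s * (r - 1) + 2 * (T / \<delta>) + 2 * \<epsilon> * r^2 * s"
    proof -
      have e1: "1 - \<delta> / \<Delta> \<le> r - 1"
      proof -
        have "0 \<le> (r - 1) * (1 - 1 / r)" using r1 by (intro mult_nonneg_nonneg) auto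
        moreover have "(r - 1) * (1 - 1 / r) = r - 2 + 1 / r" using r1 by (simp add: field_simps)
        moreover have "\<delta> / \<Delta> = 1 / r" unfolding r_def by simp
        ultimately show ?thesis by linarith
      qed
      have e2: "q * s * (1 - \<delta> / \<Delta>) \<le> s * (r - 1)"
      proof -
        have "q * s * (1 - \<delta> / \<Delta>) \<le> 1 * s * (1 - \<delta> / \<Delta>)"
          using q s0 Dpos Dp by (intro mult_right_mono) auto
        also have "\<dots> \<le> s * (r - 1)" using e1 s0 by (simp add: mult_left_mono)
        finally show ?thesis .
      qed
      have e3: "q * (T / \<Delta>) \<le> T / \<delta>"
      proof -
        have "q * (T / \<Delta>) \<le> 1 * (T / \<Delta>)" using q T0 Dp by (intro mult_right_mono) auto
        also have "\<dots> \<le> T / \<delta>" using T0 Dpos d1 by (simp add: frac_le)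
        finally show ?thesis .
      qed
      have e4: "q * (T / \<delta>) \<le> T / \<delta>"
        by (rule mult_left_le_one_le) (use q T0 d1 in auto)
      show ?thesis using e2 e3 e4 by linarith
    qed
    also have "T / \<delta> \<le> sqrt \<epsilon> * r * s"
    proof -
      have "T / \<delta> \<le> (sqrt \<epsilon> * \<Delta> * s) / \<delta>" by (rule divide_right_mono[OF Tb]) (use d1 in simp)
      also have "\<dots> = sqrt \<epsilon> * r * s" unfolding r_def by (simp add: divide_inverse mult_ac)
      finally show ?thesis .
    qed
    finally show ?thesis by simp
  qed
  have nn: "0 \<le> 2 * sqrt \<epsilon> * r * s + 2 * \<epsilon> * r^2 * s" using eps r1 s0 by simp
  have rhs: "s * ((r - 1) + 2 * sqrt \<epsilon> * r + 2 * \<epsilon> * r^2) = s * (r - 1) + 2 * sqrt \<epsilon> * r * s + 2 * \<epsilon> * r^2 * s"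
    by (simp add: algebra_simps)
  show ?thesis unfolding EX r_def[symmetric] s_def[symmetric] rhs abs_le_iff using ub lb nn by linarith
qed


lemma partB:
  fixes n :: nat and E :: "nat \<Rightarrow> nat \<Rightarrow> bool" and q \<delta> \<Delta> \<epsilon> lo hi :: real and I :: "nat set"
  assumes G: "simple_graph_on n E"
   and deg: "\<And>v. v < n \<Longrightarrow> \<delta> \<le> real (degree E v) \<and> real (degree E v) \<le> \<Delta>"
   and d1: "1 \<le> \<delta>" and dD: "\<delta> \<le> \<Delta>" and q: "0 < q" "q \<le> 1" and I: "I \<subseteq> {0..<n}" and eps: "0 \<le> \<epsilon>"
   and K2: "(\<Sum>i<n. (real (card (nbrs E i \<inter> ({0..<n} - I))))^2) \<le> \<epsilon> * \<Delta>^2 * real (card ({0..<n} - I))"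
   and Qb: "\<And>u. u < n \<Longrightarrow> lo \<le> (\<Prod>v\<in>nbrs E u. 1 - q / real (degree E v)) \<and> (\<Prod>v\<in>nbrs E u. 1 - q / real (degree E v)) \<le> hi"
  shows "\<bar>(\<Sum>u\<in>{0..<n} - I. stayF n E q I u) - exp (- q) * (1 - q) * real (card ({0..<n} - I))\<bar>
     \<le> real (card ({0..<n} - I)) * (2 * sqrt \<epsilon> * (\<Delta> / \<delta>) + \<bar>lo - exp (- q)\<bar> + \<bar>hi - exp (- q)\<bar>)"
proof -
  define U where "U = {0..<n} - I"
  define s where "s = real (card U)"
  define r where "r = \<Delta> / \<delta>"
  define c where "c = exp (- q)"
  define w where "w = \<bar>lo - c\<bar> + \<bar>hi - c\<bar>"
  define d where "d = (\<lambda>v. real (degree E v))"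
  define m where "m = (\<lambda>v. real (card (nbrs E v \<inter> U)))"
  define P where "P = (\<lambda>u. \<Prod>v\<in>I \<inter> nbrs E u. 1 - q / d v)"
  define R where "R = (\<lambda>u. \<Prod>v\<in>U \<inter> nbrs E u. 1 - q / d v)"
  define Q where "Q = (\<lambda>u. \<Prod>v\<in>nbrs E u. 1 - q / d v)"
  have finI: "finite I" using I finite_subset by blast
  have finU: "finite U" unfolding U_def by simp
  have nbsub: "nbrs E v \<subseteq> {0..<n}" for v using G unfolding simple_graph_on_def nbrs_def by auto
  have nbfin: "finite (nbrs E v)" for v using nbsub finite_subset by blast
  have dpos: "\<delta> \<le> d v" "d v \<le> \<Delta>" "0 < d v" if "v < n" for v using deg[OF that] d1 unfolding d_def by auto
  have m0: "0 \<le> m v" for v unfolding m_def by simp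
  have cardI: "real (card (nbrs E v \<inter> I)) = d v - m v" if "v < n" for v
  proof -
    have "nbrs E v = (nbrs E v \<inter> I) \<union> (nbrs E v \<inter> U)" using nbsub[of v] unfolding U_def by auto
    moreover have "(nbrs E v \<inter> I) \<inter> (nbrs E v \<inter> U) = {}" unfolding U_def by auto
    ultimately have "card (nbrs E v) = card (nbrs E v \<inter> I) + card (nbrs E v \<inter> U)"
      by (metis card_Un_disjoint finite_Int nbfin)
    thus ?thesis unfolding d_def m_def degree_def by simp
  qed
  have bv: "0 \<le> q / d v \<and> q / d v \<le> 1" if "v < n" for v
    using dpos[OF that] q d1 by (auto simp: divide_le_eq_1)
  have QPR: "Q u = P u * R u" for u
  proof -
    have "nbrs E u = (I \<inter> nbrs E u) \<union> (U \<inter> nbrs E u)" using nbsub[of u] unfolding U_def by auto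
    moreover have "(I \<inter> nbrs E u) \<inter> (U \<inter> nbrs E u) = {}" unfolding U_def by auto
    ultimately show ?thesis unfolding Q_def P_def R_def
      by (metis finite_Int nbfin prod.union_disjoint inf_commute)
  qed
  have bvN: "0 \<le> q / d v \<and> q / d v \<le> 1" if "v \<in> A \<inter> nbrs E u" for A u v
  proof -
    have "v < n" using nbsub[of u] that by auto
    thus ?thesis by (rule bv)
  qed
  have P01: "0 \<le> P u" "P u \<le> 1" for u unfolding P_def
    using prod_01[of "I \<inter> nbrs E u" "\<lambda>v. q / d v", OF bvN] by auto
  have R01: "0 \<le> R u" "R u \<le> 1" for u unfolding R_def
    using prod_01[of "U \<inter> nbrs E u" "\<lambda>v. q / d v", OF bvN] by auto
  have Rlo: "1 - m u / \<delta> \<le> R u" for u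
  proof -
    have "1 - (\<Sum>v\<in>U \<inter> nbrs E u. q / d v) \<le> R u" unfolding R_def
      by (rule prod_lower) (use finU bvN in auto)
    moreover have "(\<Sum>v\<in>U \<inter> nbrs E u. q / d v) \<le> (\<Sum>v\<in>U \<inter> nbrs E u. 1 / \<delta>)"
    proof (rule sum_mono)
      fix v assume "v \<in> U \<inter> nbrs E u"
      hence v: "v < n" unfolding U_def by auto
      have "q / d v \<le> 1 / d v" using q dpos[OF v] by (intro divide_right_mono) auto
      also have "\<dots> \<le> 1 / \<delta>" using dpos[OF v] d1 by (intro divide_left_mono) auto
      finally show "q / d v \<le> 1 / \<delta>" .
    qed
    moreover have "(\<Sum>v\<in>U \<inter> nbrs E u. 1 / \<delta>) = m u / \<delta>" unfolding m_def by (simp add: Int_commute)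
    ultimately show ?thesis by linarith
  qed
  have PQ: "0 \<le> P u - Q u" "P u - Q u \<le> m u / \<delta>" for u
  proof -
    have "P u - Q u = P u * (1 - R u)" unfolding QPR by (simp add: algebra_simps)
    moreover have "0 \<le> P u * (1 - R u)" using P01 R01 by simp
    moreover have "P u * (1 - R u) \<le> 1 * (m u / \<delta>)"
      using P01[of u] R01[of u] Rlo[of u] by (intro mult_mono) auto
    ultimately show "0 \<le> P u - Q u" "P u - Q u \<le> m u / \<delta>" by auto
  qed
  have Qc: "\<bar>Q u - c\<bar> \<le> w" if "u < n" for u
    using Qb[OF that] unfolding Q_def d_def w_def by (simp add: abs_le_iff) linarith
  have Fu: "\<bar>stayF n E q I u - (1 - q) * c\<bar> \<le> 2 * (m u / \<delta>) + w" if u: "u < n" for u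
  proof -
    have "stayF n E q I u = (1 - q * (d u - m u) / d u) * P u"
      using cardI[OF u] unfolding stayF_def P_def d_def by simp
    also have "\<dots> = ((1 - q) + q * (m u / d u)) * P u" using dpos[OF u] by (simp add: field_simps)
    finally have "stayF n E q I u = ((1 - q) + q * (m u / d u)) * P u" .
    hence "stayF n E q I u - (1 - q) * c = (1 - q) * ((P u - Q u) + (Q u - c)) + q * (m u / d u) * P u"
      by (simp add: algebra_simps)
    hence "\<bar>stayF n E q I u - (1 - q) * c\<bar> \<le> \<bar>(1 - q) * ((P u - Q u) + (Q u - c))\<bar> + \<bar>q * (m u / d u) * P u\<bar>"
      by (simp only: abs_triangle_ineq)
    also have "\<bar>(1 - q) * ((P u - Q u) + (Q u - c))\<bar> \<le> m u / \<delta> + w"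
    proof -
      have "\<bar>(1 - q) * ((P u - Q u) + (Q u - c))\<bar> = (1 - q) * \<bar>(P u - Q u) + (Q u - c)\<bar>"
        using q by (simp add: abs_mult)
      also have "\<dots> \<le> 1 * \<bar>(P u - Q u) + (Q u - c)\<bar>" using q by (intro mult_right_mono) auto
      also have "\<dots> \<le> m u / \<delta> + w" using PQ[of u] Qc[OF u] by (simp add: abs_le_iff)
      finally show ?thesis .
    qed
    also have "\<bar>q * (m u / d u) * P u\<bar> \<le> m u / \<delta>"
    proof -
      have "\<bar>q * (m u / d u) * P u\<bar> = q * (m u / d u) * P u" using q m0[of u] dpos[OF u] P01[of u] by simp
      also have "\<dots> \<le> 1 * (m u / \<delta>) * 1"
        using q m0[of u] dpos[OF u] P01[of u] d1
        by (intro mult_mono divide_left_mono) auto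
      finally show ?thesis by simp
    qed
    finally show ?thesis by simp
  qed
  have summ: "(\<Sum>u\<in>U. m u) \<le> sqrt \<epsilon> * \<Delta> * s"
  proof -
    have "(\<Sum>u\<in>U. (m u)^2) \<le> (\<Sum>u<n. (m u)^2)" unfolding U_def by (intro sum_mono2) auto
    hence K2U: "(\<Sum>u\<in>U. (m u)^2) \<le> \<epsilon> * \<Delta>^2 * s" using K2 unfolding m_def s_def U_def by simp
    have "(\<Sum>u\<in>U. m u)^2 \<le> (\<Sum>u\<in>U. 1^2) * (\<Sum>u\<in>U. (m u)^2)"
      using Cauchy_Schwarz_ineq_sum[of "\<lambda>_. 1" m U] by simp
    also have "\<dots> = s * (\<Sum>u\<in>U. (m u)^2)" unfolding s_def by simp
    also have "\<dots> \<le> s * (\<epsilon> * \<Delta>^2 * s)" using K2U unfolding s_def by (intro mult_left_mono) auto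
    also have "\<dots> = (sqrt \<epsilon> * \<Delta> * s)^2" using eps by (simp add: power_mult_distrib power2_eq_square)
    finally have "(\<Sum>u\<in>U. m u)^2 \<le> (sqrt \<epsilon> * \<Delta> * s)^2" .
    moreover have "0 \<le> sqrt \<epsilon> * \<Delta> * s" using eps dD d1 unfolding s_def by simp
    ultimately show ?thesis by (rule power2_le_imp_le)
  qed
  have "\<bar>(\<Sum>u\<in>U. stayF n E q I u) - c * (1 - q) * s\<bar> = \<bar>\<Sum>u\<in>U. (stayF n E q I u - (1 - q) * c)\<bar>"
    unfolding s_def by (simp add: sum_subtractf mult_ac)
  also have "\<dots> \<le> (\<Sum>u\<in>U. \<bar>stayF n E q I u - (1 - q) * c\<bar>)" by (rule sum_abs)
  also have "\<dots> \<le> (\<Sum>u\<in>U. 2 * (m u / \<delta>) + w)" using Fu unfolding U_def by (intro sum_mono) auto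
  also have "\<dots> = 2 / \<delta> * (\<Sum>u\<in>U. m u) + w * s" unfolding s_def
    by (simp add: sum.distrib sum_distrib_left sum_divide_distrib)
  also have "\<dots> \<le> 2 / \<delta> * (sqrt \<epsilon> * \<Delta> * s) + w * s"
    using summ d1 by (intro add_mono mult_left_mono) (auto simp: w_def)
  also have "\<dots> = s * (2 * sqrt \<epsilon> * r + w)" unfolding r_def by (simp add: divide_inverse algebra_simps)
  finally show ?thesis unfolding U_def[symmetric] s_def[symmetric] r_def[symmetric] c_def[symmetric] w_def[symmetric]
    by (simp add: algebra_simps w_def)
qed


lemma conn_facts:
  assumes C: "connected_graph_on n E" and n2: "2 \<le> n"
  shows "simple_graph_on n E" "\<And>v. v < n \<Longrightarrow> nbrs E v \<noteq> {}"
    "\<And>v. v < n \<Longrightarrow> min_degree n E \<le> degree E v \<and> degree E v \<le> max_degree n E"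
    "1 \<le> min_degree n E" "min_degree n E \<le> max_degree n E"
proof -
  show G: "simple_graph_on n E" using C unfolding connected_graph_on_def by blast
  have nbsub: "nbrs E v \<subseteq> {..<n}" for v using G unfolding simple_graph_on_def nbrs_def by auto
  have nbfin: "finite (nbrs E v)" for v using nbsub finite_subset by blast
  show ne: "nbrs E v \<noteq> {}" if v: "v < n" for v
  proof -
    define u where "u = (if v = 0 then 1 else (0::nat))"
    have u: "u < n" "u \<noteq> v" unfolding u_def using n2 v by auto
    have "E\<^sup>*\<^sup>* v u" using C v u unfolding connected_graph_on_def by blast
    thus ?thesis
    proof (cases rule: converse_rtranclpE)
      case base thus ?thesis using u by simp
    next
      case (step y) thus ?thesis unfolding nbrs_def by auto
    qed
  qed
  show md: "min_degree n E \<le> degree E v \<and> degree E v \<le> max_degree n E" if "v < n" for v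
    unfolding min_degree_def max_degree_def using that by (auto intro: Min_le Max_ge)
  have "min_degree n E \<in> degree E ` {0..<n}" unfolding min_degree_def by (rule Min_in) (use n2 in auto)
  then obtain v where v: "v < n" "min_degree n E = degree E v" by auto
  have "degree E v > 0" unfolding degree_def using ne[OF v(1)] nbfin by (simp add: card_gt_0_iff)
  thus "1 \<le> min_degree n E" using v by simp
  show "min_degree n E \<le> max_degree n E" using md[of 0] n2 by auto
qed

lemma Qbounds:
  fixes \<delta> \<Delta> :: nat
  assumes G: "simple_graph_on n E" and deg: "\<And>v. v < n \<Longrightarrow> \<delta> \<le> degree E v \<and> degree E v \<le> \<Delta>"
    and d1: "1 \<le> \<delta>" and q: "0 \<le> q" "q \<le> 1" and u: "u < n"
  shows "(1 - q / real \<delta>)^\<Delta> \<le> (\<Prod>v\<in>nbrs E u. 1 - q / real (degree E v))"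
    "(\<Prod>v\<in>nbrs E u. 1 - q / real (degree E v)) \<le> (1 - q / real \<Delta>)^\<delta>"
proof -
  have nbsub: "nbrs E v \<subseteq> {0..<n}" for v using G unfolding simple_graph_on_def nbrs_def by auto
  have dD: "\<delta> \<le> \<Delta>" using deg[OF u] by simp
  have a01: "0 \<le> 1 - q / real \<delta>" "1 - q / real \<delta> \<le> 1" using q d1 by (auto simp: divide_le_eq_1)
  have b01: "0 \<le> 1 - q / real \<Delta>" "1 - q / real \<Delta> \<le> 1" using q d1 dD by (auto simp: divide_le_eq_1)
  have "(\<Prod>v\<in>nbrs E u. 1 - q / real \<delta>) \<le> (\<Prod>v\<in>nbrs E u. 1 - q / real (degree E v))"
  proof (rule prod_mono)
    fix v assume "v \<in> nbrs E u"
    hence v: "v < n" using nbsub[of u] by auto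
    have "q / real (degree E v) \<le> q / real \<delta>" using deg[OF v] d1 q by (intro divide_left_mono) auto
    thus "0 \<le> 1 - q / real \<delta> \<and> 1 - q / real \<delta> \<le> 1 - q / real (degree E v)" using a01 by simp
  qed
  moreover have "(\<Prod>v\<in>nbrs E u. 1 - q / real \<delta>) = (1 - q / real \<delta>)^(degree E u)"
    unfolding degree_def by simp
  moreover have "(1 - q / real \<delta>)^\<Delta> \<le> (1 - q / real \<delta>)^(degree E u)"
    by (rule power_decreasing) (use deg[OF u] a01 in auto)
  ultimately show "(1 - q / real \<delta>)^\<Delta> \<le> (\<Prod>v\<in>nbrs E u. 1 - q / real (degree E v))" by simp
  have "(\<Prod>v\<in>nbrs E u. 1 - q / real (degree E v)) \<le> (\<Prod>v\<in>nbrs E u. 1 - q / real \<Delta>)"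
  proof (rule prod_mono)
    fix v assume "v \<in> nbrs E u"
    hence v: "v < n" using nbsub[of u] by auto
    have dv: "1 \<le> real (degree E v)" using deg[OF v] d1 by simp
    have "q / real \<Delta> \<le> q / real (degree E v)" using deg[OF v] d1 q by (intro divide_left_mono) auto
    moreover have "q / real (degree E v) \<le> 1" using q dv by (simp add: divide_le_eq_1)
    ultimately show "0 \<le> 1 - q / real (degree E v) \<and> 1 - q / real (degree E v) \<le> 1 - q / real \<Delta>" by simp
  qed
  moreover have "(\<Prod>v\<in>nbrs E u. 1 - q / real \<Delta>) = (1 - q / real \<Delta>)^(degree E u)"
    unfolding degree_def by simp
  moreover have "(1 - q / real \<Delta>)^(degree E u) \<le> (1 - q / real \<Delta>)^\<delta>"
    by (rule power_decreasing) (use deg[OF u] b01 in auto)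
  ultimately show "(\<Prod>v\<in>nbrs E u. 1 - q / real (degree E v)) \<le> (1 - q / real \<Delta>)^\<delta>" by simp
qed

definition epsf :: "nat \<Rightarrow> real \<Rightarrow> real \<Rightarrow> real \<Rightarrow> real" where
  "epsf n \<delta> \<Delta> lm = 2 * ((\<Delta> - \<delta>) / (\<Delta> - lm)) + 2 / ln (real n) + (lm / \<Delta>)^2"

lemma K2_bound:
  assumes C: "connected_graph_on n E" and n2: "2 \<le> n"
    and gap: "second_eig n E < real (min_degree n E)"
    and S: "S \<subseteq> {0..<n}" and Ss: "real (card S) \<le> real n / ln (real n)"
  defines "\<delta> \<equiv> real (min_degree n E)" and "\<Delta> \<equiv> real (max_degree n E)" and "lm \<equiv> second_eig n E"
  shows "(\<Sum>i<n. (real (card (nbrs E i \<inter> S)))^2) \<le> epsf n \<delta> \<Delta> lm * \<Delta>^2 * real (card S)"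
    and "0 \<le> epsf n \<delta> \<Delta> lm"
proof -
  note cf = conn_facts[OF C n2]
  have S': "S \<subseteq> {..<n}" using S by auto
  have lm0: "0 \<le> lm" unfolding lm_def second_eig_def by simp
  have d1: "1 \<le> \<delta>" using cf(4) unfolding \<delta>_def by simp
  have dD: "\<delta> \<le> \<Delta>" using cf(5) unfolding \<delta>_def \<Delta>_def by simp
  have Dp: "0 < \<Delta>" using d1 dD by simp
  have gap': "lm < \<delta>" using gap unfolding lm_def \<delta>_def .
  have lnpos: "0 < ln (real n)" using n2 by simp
  have npos: "0 < real n" using n2 by simp
  define s where "s = real (card S)"
  have tau0: "0 \<le> (\<Delta> - \<delta>) / (\<Delta> - lm)" using dD gap' by simp
  show e0: "0 \<le> epsf n \<delta> \<Delta> lm" unfolding epsf_def using tau0 lnpos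
    by (intro add_nonneg_nonneg mult_nonneg_nonneg) auto
  have K: "(\<Sum>i<n. (real (card (nbrs E i \<inter> S)))^2)
      \<le> \<Delta>^2 * (2 * s * ((\<Delta> - \<delta>) / (\<Delta> - lm)) + 2 * s^2 / real n) + lm^2 * s"
    using graph_facts(1)[OF cf(1) n2 gap S'] unfolding \<delta>_def \<Delta>_def lm_def s_def by simp
  have s0: "0 \<le> s" unfolding s_def by simp
  have ss: "s^2 / real n \<le> s / ln (real n)"
  proof -
    have "s / real n \<le> 1 / ln (real n)" using Ss npos lnpos unfolding s_def by (simp add: field_simps)
    hence "s * (s / real n) \<le> s * (1 / ln (real n))" using s0 by (rule mult_left_mono)
    thus ?thesis by (simp add: power2_eq_square)
  qed
  have "\<Delta>^2 * (2 * s * ((\<Delta> - \<delta>) / (\<Delta> - lm)) + 2 * s^2 / real n) + lm^2 * s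
      \<le> \<Delta>^2 * (2 * s * ((\<Delta> - \<delta>) / (\<Delta> - lm)) + 2 * (s / ln (real n))) + lm^2 * s"
    using ss s0 by (intro add_mono mult_left_mono) auto
  also have "\<dots> = epsf n \<delta> \<Delta> lm * \<Delta>^2 * s"
    unfolding epsf_def using Dp by (simp add: field_simps power2_eq_square)
  finally show "(\<Sum>i<n. (real (card (nbrs E i \<inter> S)))^2) \<le> epsf n \<delta> \<Delta> lm * \<Delta>^2 * real (card S)"
    using K unfolding s_def by simp
qed

theorem perN_A:
  assumes C: "connected_graph_on n E" and n2: "2 \<le> n"
    and gap: "second_eig n E < real (min_degree n E)" and q: "0 < q" "q \<le> 1"
    and I: "I \<subseteq> {0..<n}" and Is: "real (card I) \<le> real n / ln (real n)"
  defines "\<delta> \<equiv> real (min_degree n E)" and "\<Delta> \<equiv> real (max_degree n E)" and "lm \<equiv> second_eig n E"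
  shows "\<bar>measure_pmf.expectation (pp_next n E q I) (\<lambda>J. real (card (J - I))) - 2 * q * real (card I)\<bar>
     \<le> real (card I) * ((\<Delta> / \<delta> - 1) + 2 * sqrt (epsf n \<delta> \<Delta> lm) * (\<Delta> / \<delta>) + 2 * epsf n \<delta> \<Delta> lm * (\<Delta> / \<delta>)^2)"
proof -
  note cf = conn_facts[OF C n2]
  have "measure_pmf.expectation (pp_next n E q I) (\<lambda>J. real (card (J - I))) = (\<Sum>u\<in>{0..<n} - I. 1 - stayF n E q I u)"
    by (rule exp_new[OF cf(1) cf(2)]) (use q I in auto)
  moreover have "\<bar>(\<Sum>u\<in>{0..<n} - I. 1 - stayF n E q I u) - 2 * q * real (card I)\<bar>
     \<le> real (card I) * ((\<Delta> / \<delta> - 1) + 2 * sqrt (epsf n \<delta> \<Delta> lm) * (\<Delta> / \<delta>) + 2 * epsf n \<delta> \<Delta> lm * (\<Delta> / \<delta>)^2)"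
  proof (rule partA[OF cf(1)])
    show "\<And>v. v < n \<Longrightarrow> \<delta> \<le> real (degree E v) \<and> real (degree E v) \<le> \<Delta>"
      using cf(3) unfolding \<delta>_def \<Delta>_def by auto
    show "1 \<le> \<delta>" using cf(4) unfolding \<delta>_def by simp
    show "\<delta> \<le> \<Delta>" using cf(5) unfolding \<delta>_def \<Delta>_def by simp
    show "(\<Sum>i<n. (real (card (nbrs E i \<inter> I)))\<^sup>2) \<le> epsf n \<delta> \<Delta> lm * \<Delta>\<^sup>2 * real (card I)"
      using K2_bound(1)[OF C n2 gap I Is] unfolding \<delta>_def \<Delta>_def lm_def .
    show "0 \<le> epsf n \<delta> \<Delta> lm" using K2_bound(2)[OF C n2 gap I Is] unfolding \<delta>_def \<Delta>_def lm_def .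
  qed (use q I in auto)
  ultimately show ?thesis by simp
qed

theorem perN_B:
  assumes C: "connected_graph_on n E" and n2: "2 \<le> n"
    and gap: "second_eig n E < real (min_degree n E)" and q: "0 < q" "q \<le> 1"
    and I: "I \<subseteq> {0..<n}" and Us: "real (card ({0..<n} - I)) \<le> real n / ln (real n)"
  defines "\<delta> \<equiv> real (min_degree n E)" and "\<Delta> \<equiv> real (max_degree n E)" and "lm \<equiv> second_eig n E"
  shows "\<bar>measure_pmf.expectation (pp_next n E q I) (\<lambda>J. real (card ({0..<n} - J)))
       - exp (- q) * (1 - q) * real (card ({0..<n} - I))\<bar>
     \<le> real (card ({0..<n} - I)) * (2 * sqrt (epsf n \<delta> \<Delta> lm) * (\<Delta> / \<delta>)
        + \<bar>(1 - q / \<delta>)^(max_degree n E) - exp (- q)\<bar> + \<bar>(1 - q / \<Delta>)^(min_degree n E) - exp (- q)\<bar>)"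
proof -
  note cf = conn_facts[OF C n2]
  have U: "{0..<n} - I \<subseteq> {0..<n}" by auto
  have "measure_pmf.expectation (pp_next n E q I) (\<lambda>J. real (card ({0..<n} - J))) = (\<Sum>u\<in>{0..<n} - I. stayF n E q I u)"
    by (rule exp_unf[OF cf(1) cf(2)]) (use q I in auto)
  moreover have "\<bar>(\<Sum>u\<in>{0..<n} - I. stayF n E q I u) - exp (- q) * (1 - q) * real (card ({0..<n} - I))\<bar>
     \<le> real (card ({0..<n} - I)) * (2 * sqrt (epsf n \<delta> \<Delta> lm) * (\<Delta> / \<delta>)
        + \<bar>(1 - q / \<delta>)^(max_degree n E) - exp (- q)\<bar> + \<bar>(1 - q / \<Delta>)^(min_degree n E) - exp (- q)\<bar>)"
  proof (rule partB[OF cf(1)])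
    show "\<And>v. v < n \<Longrightarrow> \<delta> \<le> real (degree E v) \<and> real (degree E v) \<le> \<Delta>"
      using cf(3) unfolding \<delta>_def \<Delta>_def by auto
    show "1 \<le> \<delta>" using cf(4) unfolding \<delta>_def by simp
    show "\<delta> \<le> \<Delta>" using cf(5) unfolding \<delta>_def \<Delta>_def by simp
    show "(\<Sum>i<n. (real (card (nbrs E i \<inter> ({0..<n} - I))))\<^sup>2) \<le> epsf n \<delta> \<Delta> lm * \<Delta>\<^sup>2 * real (card ({0..<n} - I))"
      using K2_bound(1)[OF C n2 gap U Us] unfolding \<delta>_def \<Delta>_def lm_def .
    show "0 \<le> epsf n \<delta> \<Delta> lm" using K2_bound(2)[OF C n2 gap U Us] unfolding \<delta>_def \<Delta>_def lm_def .
    fix u assume u: "u < n"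
    show "(1 - q / \<delta>)^(max_degree n E) \<le> (\<Prod>v\<in>nbrs E u. 1 - q / real (degree E v)) \<and>
          (\<Prod>v\<in>nbrs E u. 1 - q / real (degree E v)) \<le> (1 - q / \<Delta>)^(min_degree n E)"
      using Qbounds[OF cf(1) cf(3) cf(4) _ _ u] q unfolding \<delta>_def \<Delta>_def by auto
  qed (use q I in auto)
  ultimately show ?thesis by simp
qed


lemma ln_lim:
  fixes f :: "'a \<Rightarrow> real"
  assumes f: "filterlim f at_top F" and q: "0 < q" "q \<le> 1"
  shows "((\<lambda>x. f x * ln (1 - q / f x)) \<longlongrightarrow> - q) F"
proof (rule real_tendsto_sandwich)
  have ev: "eventually (\<lambda>x. 2 \<le> f x) F" using f by (simp add: filterlim_at_top)
  have inv0: "((\<lambda>x. inverse (f x)) \<longlongrightarrow> 0) F" by (rule tendsto_inverse_0_at_top[OF f])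
  show "((\<lambda>x. - q - 2 * q^2 * inverse (f x)) \<longlongrightarrow> - q) F"
    using tendsto_diff[OF tendsto_const tendsto_mult[OF tendsto_const inv0], of "- q" "2 * q^2"] by simp
  show "((\<lambda>x. - q) \<longlongrightarrow> - q) F" by simp
  show "eventually (\<lambda>x. - q - 2 * q^2 * inverse (f x) \<le> f x * ln (1 - q / f x)) F"
    using ev
  proof eventually_elim
    case (elim x)
    have x: "0 \<le> q / f x" "q / f x \<le> 1 / 2" using elim q by (auto simp: field_simps)
    have "f x * (- (q / f x) - 2 * (q / f x)^2) \<le> f x * ln (1 - q / f x)"
      using ln_one_minus_pos_lower_bound[OF x] elim by (intro mult_left_mono) auto
    moreover have "f x * (- (q / f x) - 2 * (q / f x)^2) = - q - 2 * q^2 * inverse (f x)"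
      using elim by (simp add: field_simps power2_eq_square)
    ultimately show ?case by simp
  qed
  show "eventually (\<lambda>x. f x * ln (1 - q / f x) \<le> - q) F"
    using ev
  proof eventually_elim
    case (elim x)
    have x: "0 \<le> q / f x" "q / f x < 1" using elim q by (auto simp: field_simps)
    have "f x * ln (1 - q / f x) \<le> f x * (- (q / f x))"
      using ln_one_minus_pos_upper_bound[OF x] elim by (intro mult_left_mono) auto
    thus ?case using elim by simp
  qed
qed

lemma pow_lim:
  fixes f g :: "'a \<Rightarrow> real" and k :: "'a \<Rightarrow> nat"
  assumes f: "filterlim f at_top F" and g: "(g \<longlongrightarrow> 1) F" and q: "0 < q" "q \<le> 1"
    and h: "eventually (\<lambda>x. real (k x) = f x * g x) F"
  shows "((\<lambda>x. (1 - q / f x)^(k x)) \<longlongrightarrow> exp (- q)) F"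
proof -
  have ev: "eventually (\<lambda>x. 2 \<le> f x) F" using f by (simp add: filterlim_at_top)
  have lim: "((\<lambda>x. exp (g x * (f x * ln (1 - q / f x)))) \<longlongrightarrow> exp (1 * - q)) F"
    by (intro tendsto_exp tendsto_mult g ln_lim[OF f q])
  show ?thesis
  proof (rule Lim_transform_eventually[OF lim[simplified]])
    show "eventually (\<lambda>x. exp (g x * (f x * ln (1 - q / f x))) = (1 - q / f x)^(k x)) F"
      using ev h
    proof eventually_elim
      case (elim x)
      have pos: "0 < 1 - q / f x" using elim q by (auto simp: field_simps)
      have "(1 - q / f x)^(k x) = (1 - q / f x) powr real (k x)" using powr_realpow[OF pos] by simp
      also have "\<dots> = exp (real (k x) * ln (1 - q / f x))" unfolding powr_def by (rule if_not_P) (use pos in linarith)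
      also have "\<dots> = exp (g x * (f x * ln (1 - q / f x)))" using elim by (simp add: mult_ac)
      finally show ?case by simp
    qed
  qed
qed

lemma exp_bounds:
  fixes f :: "'b \<Rightarrow> real"
  assumes "\<And>x. 0 \<le> f x" "\<And>x. f x \<le> c"
  shows "0 \<le> measure_pmf.expectation p f" "measure_pmf.expectation p f \<le> c"
proof -
  have int: "integrable (measure_pmf p) f"
    by (rule measure_pmf.integrable_const_bound[where B=c]) (use assms in \<open>auto intro: order_trans\<close>)
  show "0 \<le> measure_pmf.expectation p f" using assms by (intro integral_nonneg_AE) auto
  show "measure_pmf.expectation p f \<le> c" using assms by (intro measure_pmf.integral_le_const[OF int]) auto
qed


theorem lemma3p4:
  fixes G :: "nat \<Rightarrow> nat \<Rightarrow> nat \<Rightarrow> bool" and q :: real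
  assumes "expander_seq G" and "0 < q" and "q \<le> 1"
  shows
    "(\<exists>e :: nat \<Rightarrow> real. e \<longlonglongrightarrow> 0 \<and>
       (\<forall>n I. I \<subseteq> {0..<n} \<and> real (card I) \<le> real n / ln (real n) \<longrightarrow>
          \<bar>measure_pmf.expectation (pp_next n (G n) q I) (\<lambda>J. real (card (J - I)))
             - 2 * q * real (card I)\<bar> \<le> \<bar>e n\<bar> * real (card I))) \<and>
     (\<exists>e :: nat \<Rightarrow> real. e \<longlonglongrightarrow> 0 \<and>
       (\<forall>n I. I \<subseteq> {0..<n} \<and> real (card ({0..<n} - I)) \<le> real n / ln (real n) \<longrightarrow>
          \<bar>measure_pmf.expectation (pp_next n (G n) q I) (\<lambda>J. real (card ({0..<n} - J)))
             - exp (- q) * (1 - q) * real (card ({0..<n} - I))\<bar>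
            \<le> \<bar>e n\<bar> * real (card ({0..<n} - I))))"
proof -
  note q = assms(2,3)
  have conn: "\<And>n. 0 < n \<Longrightarrow> connected_graph_on n (G n)"
    and rc0: "(\<lambda>n. real (max_degree n (G n)) / real (min_degree n (G n))) \<longlonglongrightarrow> 1"
    and lc0: "(\<lambda>n. second_eig n (G n) / real (max_degree n (G n))) \<longlonglongrightarrow> 0"
    using assms(1) unfolding expander_seq_def by auto
  define \<delta> where "\<delta> = (\<lambda>n. real (min_degree n (G n)))"
  define \<Delta> where "\<Delta> = (\<lambda>n. real (max_degree n (G n)))"
  define lm where "lm = (\<lambda>n. second_eig n (G n))"
  define r where "r = (\<lambda>n. \<Delta> n / \<delta> n)"
  define l where "l = (\<lambda>n. lm n / \<Delta> n)"
  have rc: "r \<longlonglongrightarrow> 1" using rc0 unfolding r_def \<Delta>_def \<delta>_def .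
  have lc: "l \<longlonglongrightarrow> 0" using lc0 unfolding l_def \<Delta>_def lm_def .
  have rc': "(\<lambda>n. \<Delta> n / \<delta> n) \<longlonglongrightarrow> 1" using rc unfolding r_def .
  have lr0: "(\<lambda>n. l n * r n) \<longlonglongrightarrow> 0" using tendsto_mult[OF lc rc] by simp
  define good where "good = (\<lambda>n. 2 \<le> n \<and> l n * r n < 1 / 2)"
  have evgood: "eventually good sequentially"
  proof -
    have "eventually (\<lambda>n. l n * r n < 1 / 2) sequentially" by (rule order_tendstoD(2)[OF lr0]) simp
    moreover have "eventually (\<lambda>n. 2 \<le> n) sequentially" by (rule eventually_ge_at_top)
    ultimately show ?thesis unfolding good_def by eventually_elim auto
  qed
  have gf: "2 \<le> n \<and> connected_graph_on n (G n) \<and> 1 \<le> \<delta> n \<and> \<delta> n \<le> \<Delta> n \<and> 0 < \<Delta> n \<and> 0 \<le> lm n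
      \<and> lm n < \<delta> n \<and> \<Delta> n = r n * \<delta> n \<and> lm n = l n * r n * \<delta> n" if g: "good n" for n
  proof -
    have n2: "2 \<le> n" using g unfolding good_def by simp
    have C: "connected_graph_on n (G n)" using conn n2 by simp
    note cf = conn_facts[OF C n2]
    have d1: "1 \<le> \<delta> n" using cf(4) unfolding \<delta>_def by simp
    have dD: "\<delta> n \<le> \<Delta> n" using cf(5) unfolding \<delta>_def \<Delta>_def by simp
    have Dp: "0 < \<Delta> n" using d1 dD by simp
    have lm0: "0 \<le> lm n" unfolding lm_def second_eig_def by simp
    have Dr: "\<Delta> n = r n * \<delta> n" unfolding r_def using d1 by simp
    have "l n * r n * \<delta> n = l n * \<Delta> n" using Dr by (simp add: mult_ac)
    also have "\<dots> = lm n" unfolding l_def using Dp by simp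
    finally have lmr: "lm n = l n * r n * \<delta> n" by simp
    have "l n * r n * \<delta> n < 1 * \<delta> n" using g d1 unfolding good_def by (intro mult_strict_right_mono) auto
    hence "lm n < \<delta> n" using lmr by simp
    thus ?thesis using n2 C d1 dD Dp lm0 Dr lmr by blast
  qed
  define z where "z = (\<lambda>n. (r n)^2 * inverse (real n) + (l n)^2 * (r n)^2)"
  have z0: "z \<longlonglongrightarrow> 0"
  proof -
    have "z \<longlonglongrightarrow> 1^2 * 0 + 0^2 * 1^2" unfolding z_def
      by (rule tendsto_add tendsto_mult tendsto_power rc lc lim_inverse_n)+
    thus ?thesis by simp
  qed
  have zpos: "eventually (\<lambda>n. 0 < z n) sequentially"
    using evgood
  proof eventually_elim
    case (elim n)
    have "0 < r n" unfolding r_def using gf[OF elim] by (intro divide_pos_pos) auto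
    moreover have "2 \<le> n" using gf[OF elim] by simp
    ultimately show ?case unfolding z_def by (intro add_pos_nonneg) auto
  qed
  have zinv: "filterlim (\<lambda>n. inverse (z n)) at_top sequentially"
    by (rule filterlim_inverse_at_top[OF z0 zpos])
  have dz: "eventually (\<lambda>n. inverse (z n) \<le> \<delta> n) sequentially"
    using evgood zpos
  proof eventually_elim
    case (elim n)
    note g = gf[OF elim(1)]
    have n2: "2 \<le> n" using g by simp
    have C: "connected_graph_on n (G n)" using g by simp
    note cf = conn_facts[OF C n2]
    have gap: "second_eig n (G n) < real (min_degree n (G n))" using g unfolding lm_def \<delta>_def by blast
    have "real n * \<delta> n \<le> (\<Delta> n)^2 + real n * (lm n)^2"
      using graph_facts(2)[OF cf(1) n2 gap] unfolding \<delta>_def \<Delta>_def lm_def .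
    also have "\<dots> = real n * \<delta> n * (\<delta> n * z n)"
      unfolding z_def using g n2 by (simp add: field_simps power2_eq_square)
    finally have "real n * \<delta> n * 1 \<le> real n * \<delta> n * (\<delta> n * z n)" by simp
    hence "1 \<le> \<delta> n * z n" using g n2 by (subst (asm) mult_le_cancel_left_pos) auto
    thus ?case using elim(2) by (simp add: field_simps)
  qed
  have dinf: "filterlim \<delta> at_top sequentially"
    by (rule filterlim_at_top_mono[OF zinv dz])
  have Dinf: "filterlim \<Delta> at_top sequentially"
  proof (rule filterlim_at_top_mono[OF dinf])
    show "eventually (\<lambda>n. \<delta> n \<le> \<Delta> n) sequentially" using evgood by eventually_elim (use gf in blast)
  qed
  define \<epsilon> where "\<epsilon> = (\<lambda>n. epsf n (\<delta> n) (\<Delta> n) (lm n))"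
  have lnlim: "((\<lambda>n. 2 / ln (real n)) \<longlongrightarrow> 0) sequentially"
  proof -
    have "filterlim (\<lambda>n. ln (real n)) at_top sequentially"
      by (rule filterlim_compose[OF ln_at_top filterlim_real_sequentially])
    thus ?thesis by (intro tendsto_divide_0[OF tendsto_const]) (rule filterlim_at_top_imp_at_infinity)
  qed
  have eps_lim: "\<epsilon> \<longlonglongrightarrow> 0"
  proof -
    have lim: "(\<lambda>n. 2 * ((r n - 1) / (r n - l n * r n)) + 2 / ln (real n) + (l n)^2) \<longlonglongrightarrow> 2 * ((1 - 1) / (1 - 0 * 1)) + 0 + 0^2"
      by (intro tendsto_intros rc lc lnlim) auto
    hence lim0: "(\<lambda>n. 2 * ((r n - 1) / (r n - l n * r n)) + 2 / ln (real n) + (l n)^2) \<longlonglongrightarrow> 0" by simp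
    show ?thesis
    proof (rule Lim_transform_eventually[OF lim0])
      show "eventually (\<lambda>n. 2 * ((r n - 1) / (r n - l n * r n)) + 2 / ln (real n) + (l n)^2 = \<epsilon> n) sequentially"
        using evgood
      proof eventually_elim
        case (elim n)
        note g = gf[OF elim]
        have "(\<Delta> n - \<delta> n) / (\<Delta> n - lm n) = (r n - 1) / (r n - l n * r n)"
        proof -
          have dpos: "\<delta> n \<noteq> 0" using g by simp
          have "(\<Delta> n - \<delta> n) / (\<Delta> n - lm n) = ((r n - 1) * \<delta> n) / ((r n - l n * r n) * \<delta> n)"
            using g by (simp add: algebra_simps)
          also have "\<dots> = (r n - 1) / (r n - l n * r n)" using dpos by simp
          finally show ?thesis .
        qed
        thus ?case unfolding \<epsilon>_def epsf_def l_def by simp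
      qed
    qed
  qed
  define errA where "errA = (\<lambda>n. (\<Delta> n / \<delta> n - 1) + 2 * sqrt (\<epsilon> n) * (\<Delta> n / \<delta> n) + 2 * \<epsilon> n * (\<Delta> n / \<delta> n)^2)"
  have errA_lim: "errA \<longlonglongrightarrow> 0"
  proof -
    have "errA \<longlonglongrightarrow> (1 - 1) + 2 * sqrt 0 * 1 + 2 * 0 * 1^2"
      unfolding errA_def by (intro tendsto_intros rc' eps_lim)
    thus ?thesis by simp
  qed
  define a where "a = (\<lambda>n. (1 - q / \<delta> n)^(max_degree n (G n)))"
  define b where "b = (\<lambda>n. (1 - q / \<Delta> n)^(min_degree n (G n)))"
  have a_lim: "a \<longlonglongrightarrow> exp (- q)" unfolding a_def
  proof (rule pow_lim[OF dinf rc q])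
    show "eventually (\<lambda>n. real (max_degree n (G n)) = \<delta> n * r n) sequentially"
      using evgood by eventually_elim (use gf in \<open>auto simp: \<Delta>_def mult.commute\<close>)
  qed
  have b_lim: "b \<longlonglongrightarrow> exp (- q)" unfolding b_def
  proof (rule pow_lim[OF Dinf _ q])
    show "(\<lambda>n. inverse (r n)) \<longlonglongrightarrow> 1" using tendsto_inverse[OF rc] by simp
    show "eventually (\<lambda>n. real (min_degree n (G n)) = \<Delta> n * inverse (r n)) sequentially"
      using evgood
    proof eventually_elim
      case (elim n)
      note g = gf[OF elim]
      have "\<Delta> n * inverse (r n) = \<delta> n" using g by (simp add: r_def field_simps)
      thus ?case unfolding \<delta>_def by simp
    qed
  qed
  define errB where "errB = (\<lambda>n. 2 * sqrt (\<epsilon> n) * (\<Delta> n / \<delta> n) + \<bar>a n - exp (- q)\<bar> + \<bar>b n - exp (- q)\<bar>)"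
  have errB_lim: "errB \<longlonglongrightarrow> 0"
  proof -
    have "errB \<longlonglongrightarrow> 2 * sqrt 0 * 1 + \<bar>exp (- q) - exp (- q)\<bar> + \<bar>exp (- q) - exp (- q)\<bar>"
      unfolding errB_def by (intro tendsto_intros rc' eps_lim a_lim b_lim)
    thus ?thesis by simp
  qed
  obtain N where N: "\<And>n. N \<le> n \<Longrightarrow> good n" using evgood unfolding eventually_sequentially by blast
  define eA where "eA = (\<lambda>n. if n < N then real n + 2 else errA n)"
  define eB where "eB = (\<lambda>n. if n < N then 1 else errB n)"
  have eA_lim: "eA \<longlonglongrightarrow> 0"
  proof (rule Lim_transform_eventually[OF errA_lim])
    show "eventually (\<lambda>n. errA n = eA n) sequentially"
      unfolding eA_def eventually_sequentially by (rule exI[of _ N]) auto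
  qed
  have eB_lim: "eB \<longlonglongrightarrow> 0"
  proof (rule Lim_transform_eventually[OF errB_lim])
    show "eventually (\<lambda>n. errB n = eB n) sequentially"
      unfolding eB_def eventually_sequentially by (rule exI[of _ N]) auto
  qed
  have partA: "\<bar>measure_pmf.expectation (pp_next n (G n) q I) (\<lambda>J. real (card (J - I)))
             - 2 * q * real (card I)\<bar> \<le> \<bar>eA n\<bar> * real (card I)"
    if I: "I \<subseteq> {0..<n}" and Is: "real (card I) \<le> real n / ln (real n)" for n I
  proof (cases "n < N")
    case False
    hence Nn: "N \<le> n" by simp
    note g = gf[OF N[OF Nn]]
    have gap: "second_eig n (G n) < real (min_degree n (G n))" using g unfolding lm_def \<delta>_def by blast
    have "\<bar>measure_pmf.expectation (pp_next n (G n) q I) (\<lambda>J. real (card (J - I))) - 2 * q * real (card I)\<bar>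
        \<le> real (card I) * errA n"
      using perN_A[OF _ _ gap q I Is] g False unfolding errA_def \<epsilon>_def \<delta>_def \<Delta>_def lm_def by simp
    also have "\<dots> \<le> real (card I) * \<bar>eA n\<bar>" using False unfolding eA_def by (intro mult_left_mono) auto
    finally show ?thesis by (simp add: mult.commute)
  next
    case True
    define Ex where "Ex = measure_pmf.expectation (pp_next n (G n) q I) (\<lambda>J. real (card (J - I)))"
    have Ex: "Ex = measure_pmf.expectation (pp_choices n (G n) q) (\<lambda>\<omega>. real (card (pp_step n I \<omega> - I)))"
      unfolding Ex_def pp_next_def integral_map_pmf ..
    show ?thesis
    proof (cases "I = {}")
      case True
      have e: "pp_step n I \<omega> - I = {}" for \<omega> unfolding pp_step_def True by auto
      have "(\<lambda>\<omega>. real (card (pp_step n I \<omega> - I))) = (\<lambda>\<omega>. 0)" by (rule ext) (simp only: e card.empty of_nat_0)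
      hence "Ex = 0" unfolding Ex by simp
      thus ?thesis using True unfolding Ex_def by simp
    next
      case False
      have s1: "1 \<le> real (card I)" using False I finite_subset[OF I] by (simp add: card_gt_0_iff Suc_le_eq)
      have bnd: "0 \<le> Ex" "Ex \<le> real n"
      proof -
        have "card (pp_step n I \<omega> - I) \<le> n" for \<omega>
        proof -
          have "pp_step n I \<omega> - I \<subseteq> {0..<n}" unfolding pp_step_def by auto
          thus ?thesis using card_mono[of "{0..<n}"] by fastforce
        qed
        hence "\<And>\<omega>. real (card (pp_step n I \<omega> - I)) \<le> real n" by simp
        thus "0 \<le> Ex" "Ex \<le> real n" unfolding Ex using exp_bounds[of "\<lambda>\<omega>. real (card (pp_step n I \<omega> - I))" "real n"] by auto
      qed
      have qs: "q * real (card I) \<le> 1 * real (card I)" using q by (intro mult_right_mono) auto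
      have qs0: "0 \<le> q * real (card I)" using q by simp
      have "\<bar>Ex - 2 * q * real (card I)\<bar> \<le> real n + 2 * real (card I)"
        using bnd qs qs0 unfolding abs_le_iff by linarith
      also have "\<dots> \<le> (real n + 2) * real (card I)"
      proof -
        have "real n * 1 \<le> real n * real (card I)" using s1 by (intro mult_left_mono) auto
        thus ?thesis by (simp add: algebra_simps)
      qed
      also have "\<dots> = \<bar>eA n\<bar> * real (card I)" using True unfolding eA_def by simp
      finally show ?thesis unfolding Ex_def .
    qed
  qed
  have partB: "\<bar>measure_pmf.expectation (pp_next n (G n) q I) (\<lambda>J. real (card ({0..<n} - J)))
             - exp (- q) * (1 - q) * real (card ({0..<n} - I))\<bar>
            \<le> \<bar>eB n\<bar> * real (card ({0..<n} - I))"
    if I: "I \<subseteq> {0..<n}" and Us: "real (card ({0..<n} - I)) \<le> real n / ln (real n)" for n I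
  proof (cases "n < N")
    case False
    hence Nn: "N \<le> n" by simp
    note g = gf[OF N[OF Nn]]
    have gap: "second_eig n (G n) < real (min_degree n (G n))" using g unfolding lm_def \<delta>_def by blast
    have "\<bar>measure_pmf.expectation (pp_next n (G n) q I) (\<lambda>J. real (card ({0..<n} - J)))
             - exp (- q) * (1 - q) * real (card ({0..<n} - I))\<bar>
        \<le> real (card ({0..<n} - I)) * errB n"
      using perN_B[OF _ _ gap q I Us] g False unfolding errB_def \<epsilon>_def \<delta>_def \<Delta>_def lm_def a_def b_def by simp
    also have "\<dots> \<le> real (card ({0..<n} - I)) * \<bar>eB n\<bar>" using False unfolding eB_def by (intro mult_left_mono) auto
    finally show ?thesis by (simp add: mult.commute)
  next
    case True
    define Ex where "Ex = measure_pmf.expectation (pp_next n (G n) q I) (\<lambda>J. real (card ({0..<n} - J)))"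
    define u where "u = real (card ({0..<n} - I))"
    have Ex: "Ex = measure_pmf.expectation (pp_choices n (G n) q) (\<lambda>\<omega>. real (card ({0..<n} - pp_step n I \<omega>)))"
      unfolding Ex_def pp_next_def integral_map_pmf ..
    have bnd: "0 \<le> Ex" "Ex \<le> u"
    proof -
      have "card ({0..<n} - pp_step n I \<omega>) \<le> card ({0..<n} - I)" for \<omega>
        by (rule card_mono) (auto simp: pp_step_def)
      hence "\<And>\<omega>. real (card ({0..<n} - pp_step n I \<omega>)) \<le> u" unfolding u_def by simp
      thus "0 \<le> Ex" "Ex \<le> u" unfolding Ex using exp_bounds[of "\<lambda>\<omega>. real (card ({0..<n} - pp_step n I \<omega>))" u] by auto
    qed
    have c01: "0 \<le> exp (- q) * (1 - q)" "exp (- q) * (1 - q) \<le> 1"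
    proof -
      show "0 \<le> exp (- q) * (1 - q)" using q by simp
      have "exp (- q) \<le> 1" using q by simp
      thus "exp (- q) * (1 - q) \<le> 1" using q by (intro mult_le_one) auto
    qed
    have u0: "0 \<le> u" unfolding u_def by simp
    have "0 \<le> exp (- q) * (1 - q) * u" "exp (- q) * (1 - q) * u \<le> u"
      using c01 u0 by (auto intro: mult_left_le_one_le)
    hence "\<bar>Ex - exp (- q) * (1 - q) * u\<bar> \<le> 1 * u" using bnd by (simp add: abs_le_iff)
    thus ?thesis using True unfolding eB_def Ex_def u_def by simp
  qed
  show ?thesis
    apply (rule conjI)
     apply (rule exI[of _ eA], rule conjI, rule eA_lim)
     apply (intro allI impI)
     apply (rule partA; simp)
    apply (rule exI[of _ eB], rule conjI, rule eB_lim)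
    apply (intro allI impI)
    apply (rule partB; simp)
    done
qed


end
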